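(* Let $\mathbf{L}=(L,\le)$ be a finite lattice with more than two elements (least element $0$, greatest element $1$) and let $(R,\vee,\circ)$ be a subsemiring of $(\mathrm{Res}_1(\mathbf{L}),\vee,\circ)$ such that (i) $f_{a,0}\in R$ for every $a\in L\setminus\{1\}$; (ii) for every $f\in R$ there exists $a\in L\setminus\{1\}$ with $f_{a,0}\le f$ (pointwise); (iii) for all $a\in L\setminus\{0,1\}$ and all $b\in L$ there exists $f\in R$ with $f(a)=b$. Then $(R,\vee,\circ)$ is a finite simple additively idempotent semiring whose greatest element is right but not left absorbing. Conversely, every finite simple additively idempotent semiring $(S,+,\cdot)$ with $|S|>2$ whose greatest element is right but not left absorbing is isomorphic to such a semiring $(R,\vee,\circ)$ for some such lattice $\mathbf{L}$.
   Context: A semiring is a nonempty set with a commutative semigroup operation $+$ and a semigroup operation $\cdot$ satisfying both distributive laws. It is simple if its only congruences are the identity and the full relation; additively idempotent if $r+r=r$; then $x\le y:\Leftrightarrow x+y=y$ is a partial order, and for finite semirings the greatest element is the sum of all elements. An element $r$ is right absorbing if $sr=r$ for all $s$, left absorbing if $rs=r$ for all $s$. For a finite lattice $\mathbf{L}$, $\mathrm{Res}_1(\mathbf{L})$ is the set of maps $f:L\to L$ preserving binary joins with $f(0)=0$ and $f(1)=1$, a semiring under pointwise join and composition. For $a,b\in L$, $f_{a,b}:L\to L$ is defined by $f_{a,b}(x)=b$ if $x\le a$ and $f_{a,b}(x)=1$ otherwise. *)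

theory Defs
  imports Main "HOL-Library.FuncSet"
begin

definition semiring :: "'a set \<Rightarrow> ('a \<Rightarrow> 'a \<Rightarrow> 'a) \<Rightarrow> ('a \<Rightarrow> 'a \<Rightarrow> 'a) \<Rightarrow> bool" where
  "semiring S add mul \<longleftrightarrow> S \<noteq> {} \<and>
     (\<forall>x\<in>S. \<forall>y\<in>S. add x y \<in> S \<and> mul x y \<in> S) \<and>
     (\<forall>x\<in>S. \<forall>y\<in>S. \<forall>z\<in>S. add (add x y) z = add x (add y z)) \<and>
     (\<forall>x\<in>S. \<forall>y\<in>S. add x y = add y x) \<and>
     (\<forall>x\<in>S. \<forall>y\<in>S. \<forall>z\<in>S. mul (mul x y) z = mul x (mul y z)) \<and>
     (\<forall>x\<in>S. \<forall>y\<in>S. \<forall>z\<in>S. mul x (add y z) = add (mul x y) (mul x z)) \<and>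
     (\<forall>x\<in>S. \<forall>y\<in>S. \<forall>z\<in>S. mul (add x y) z = add (mul x z) (mul y z))"

definition semiring_congruence ::
  "'a set \<Rightarrow> ('a \<Rightarrow> 'a \<Rightarrow> 'a) \<Rightarrow> ('a \<Rightarrow> 'a \<Rightarrow> 'a) \<Rightarrow> 'a rel \<Rightarrow> bool" where
  "semiring_congruence S add mul r \<longleftrightarrow> equiv S r \<and>
     (\<forall>x y u v. (x, y) \<in> r \<longrightarrow> (u, v) \<in> r \<longrightarrow>
        (add x u, add y v) \<in> r \<and> (mul x u, mul y v) \<in> r)"

definition simple_semiring :: "'a set \<Rightarrow> ('a \<Rightarrow> 'a \<Rightarrow> 'a) \<Rightarrow> ('a \<Rightarrow> 'a \<Rightarrow> 'a) \<Rightarrow> bool" where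
  "simple_semiring S add mul \<longleftrightarrow>
     (\<forall>r. semiring_congruence S add mul r \<longrightarrow> r = Id_on S \<or> r = S \<times> S)"

definition add_idempotent :: "'a set \<Rightarrow> ('a \<Rightarrow> 'a \<Rightarrow> 'a) \<Rightarrow> bool" where
  "add_idempotent S add \<longleftrightarrow> (\<forall>x\<in>S. add x x = x)"

definition greatest_elem :: "'a set \<Rightarrow> ('a \<Rightarrow> 'a \<Rightarrow> 'a) \<Rightarrow> 'a \<Rightarrow> bool" where
  "greatest_elem S add g \<longleftrightarrow> g \<in> S \<and> (\<forall>x\<in>S. add x g = g)"

definition right_absorbing :: "'a set \<Rightarrow> ('a \<Rightarrow> 'a \<Rightarrow> 'a) \<Rightarrow> 'a \<Rightarrow> bool" where
  "right_absorbing S mul r \<longleftrightarrow> (\<forall>s\<in>S. mul s r = r)"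

definition left_absorbing :: "'a set \<Rightarrow> ('a \<Rightarrow> 'a \<Rightarrow> 'a) \<Rightarrow> 'a \<Rightarrow> bool" where
  "left_absorbing S mul r \<longleftrightarrow> (\<forall>s\<in>S. mul r s = r)"

definition semiring_iso ::
  "('a \<Rightarrow> 'b) \<Rightarrow> 'a set \<Rightarrow> ('a \<Rightarrow> 'a \<Rightarrow> 'a) \<Rightarrow> ('a \<Rightarrow> 'a \<Rightarrow> 'a)
     \<Rightarrow> 'b set \<Rightarrow> ('b \<Rightarrow> 'b \<Rightarrow> 'b) \<Rightarrow> ('b \<Rightarrow> 'b \<Rightarrow> 'b) \<Rightarrow> bool" where
  "semiring_iso \<phi> S add mul T add' mul' \<longleftrightarrow> bij_betw \<phi> S T \<and>
     (\<forall>x\<in>S. \<forall>y\<in>S. \<phi> (add x y) = add' (\<phi> x) (\<phi> y) \<and> \<phi> (mul x y) = mul' (\<phi> x) (\<phi> y))"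

definition is_lub :: "'b set \<Rightarrow> ('b \<Rightarrow> 'b \<Rightarrow> bool) \<Rightarrow> 'b \<Rightarrow> 'b \<Rightarrow> 'b \<Rightarrow> bool" where
  "is_lub L le x y z \<longleftrightarrow> z \<in> L \<and> le x z \<and> le y z \<and> (\<forall>w\<in>L. le x w \<and> le y w \<longrightarrow> le z w)"

definition is_glb :: "'b set \<Rightarrow> ('b \<Rightarrow> 'b \<Rightarrow> bool) \<Rightarrow> 'b \<Rightarrow> 'b \<Rightarrow> 'b \<Rightarrow> bool" where
  "is_glb L le x y z \<longleftrightarrow> z \<in> L \<and> le z x \<and> le z y \<and> (\<forall>w\<in>L. le w x \<and> le w y \<longrightarrow> le w z)"

definition finite_lattice_on :: "'b set \<Rightarrow> ('b \<Rightarrow> 'b \<Rightarrow> bool) \<Rightarrow> bool" where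
  "finite_lattice_on L le \<longleftrightarrow> finite L \<and> L \<noteq> {} \<and>
     (\<forall>x\<in>L. le x x) \<and>
     (\<forall>x\<in>L. \<forall>y\<in>L. le x y \<and> le y x \<longrightarrow> x = y) \<and>
     (\<forall>x\<in>L. \<forall>y\<in>L. \<forall>z\<in>L. le x y \<and> le y z \<longrightarrow> le x z) \<and>
     (\<forall>x\<in>L. \<forall>y\<in>L. (\<exists>z. is_lub L le x y z) \<and> (\<exists>z. is_glb L le x y z))"

definition ljoin :: "'b set \<Rightarrow> ('b \<Rightarrow> 'b \<Rightarrow> bool) \<Rightarrow> 'b \<Rightarrow> 'b \<Rightarrow> 'b" where
  "ljoin L le x y = (THE z. is_lub L le x y z)"

definition lbot :: "'b set \<Rightarrow> ('b \<Rightarrow> 'b \<Rightarrow> bool) \<Rightarrow> 'b" where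
  "lbot L le = (THE z. z \<in> L \<and> (\<forall>x\<in>L. le z x))"

definition ltop :: "'b set \<Rightarrow> ('b \<Rightarrow> 'b \<Rightarrow> bool) \<Rightarrow> 'b" where
  "ltop L le = (THE z. z \<in> L \<and> (\<forall>x\<in>L. le x z))"

text \<open>Maps L -> L are represented as extensional functions (value undefined off L).\<close>

definition Res1 :: "'b set \<Rightarrow> ('b \<Rightarrow> 'b \<Rightarrow> bool) \<Rightarrow> ('b \<Rightarrow> 'b) set" where
  "Res1 L le = {f \<in> L \<rightarrow>\<^sub>E L.
      (\<forall>x\<in>L. \<forall>y\<in>L. f (ljoin L le x y) = ljoin L le (f x) (f y)) \<and>
      f (lbot L le) = lbot L le \<and> f (ltop L le) = ltop L le}"

definition fjoin :: "'b set \<Rightarrow> ('b \<Rightarrow> 'b \<Rightarrow> bool) \<Rightarrow> ('b \<Rightarrow> 'b) \<Rightarrow> ('b \<Rightarrow> 'b) \<Rightarrow> ('b \<Rightarrow> 'b)" where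
  "fjoin L le f g = (\<lambda>x\<in>L. ljoin L le (f x) (g x))"

definition fcomp :: "'b set \<Rightarrow> ('b \<Rightarrow> 'b) \<Rightarrow> ('b \<Rightarrow> 'b) \<Rightarrow> ('b \<Rightarrow> 'b)" where
  "fcomp L f g = compose L f g"

definition subsemiring_Res1 :: "'b set \<Rightarrow> ('b \<Rightarrow> 'b \<Rightarrow> bool) \<Rightarrow> ('b \<Rightarrow> 'b) set \<Rightarrow> bool" where
  "subsemiring_Res1 L le R \<longleftrightarrow> R \<noteq> {} \<and> R \<subseteq> Res1 L le \<and>
     (\<forall>f\<in>R. \<forall>g\<in>R. fjoin L le f g \<in> R \<and> fcomp L f g \<in> R)"

definition fab :: "'b set \<Rightarrow> ('b \<Rightarrow> 'b \<Rightarrow> bool) \<Rightarrow> 'b \<Rightarrow> 'b \<Rightarrow> ('b \<Rightarrow> 'b)" where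
  "fab L le a b = (\<lambda>x\<in>L. if le x a then b else ltop L le)"

definition good_pair :: "'b set \<Rightarrow> ('b \<Rightarrow> 'b \<Rightarrow> bool) \<Rightarrow> ('b \<Rightarrow> 'b) set \<Rightarrow> bool" where
  "good_pair L le R \<longleftrightarrow>
     finite_lattice_on L le \<and> card L > 2 \<and> subsemiring_Res1 L le R \<and>
     (\<forall>a\<in>L - {ltop L le}. fab L le a (lbot L le) \<in> R) \<and>
     (\<forall>f\<in>R. \<exists>a\<in>L - {ltop L le}. \<forall>x\<in>L. le (fab L le a (lbot L le) x) (f x)) \<and>
     (\<forall>a\<in>L - {lbot L le, ltop L le}. \<forall>b\<in>L. \<exists>f\<in>R. f a = b)"

end

theory Submission
  imports Defs
begin


lemma gmax:
  assumes "finite D" "D \<noteq> {}"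
    and rf: "\<And>x. x \<in> D \<Longrightarrow> le x x"
    and cl: "\<And>x y. x \<in> D \<Longrightarrow> y \<in> D \<Longrightarrow> jn x y \<in> D \<and> le x (jn x y) \<and> le y (jn x y)"
    and tr: "\<And>x y z. x \<in> D \<Longrightarrow> y \<in> D \<Longrightarrow> z \<in> D \<Longrightarrow> le x y \<Longrightarrow> le y z \<Longrightarrow> le x z"
  shows "\<exists>m\<in>D. \<forall>z\<in>D. le z m"
proof -
  have "F \<subseteq> D \<Longrightarrow> \<exists>m\<in>D. \<forall>z\<in>F. le z m" if "finite F" "F \<noteq> {}" for F
    using that
  proof (induction F rule: finite_ne_induct)
    case (singleton x)
    then show ?case using rf by auto
  next
    case (insert x F)
    then obtain m where m: "m \<in> D" "\<forall>z\<in>F. le z m" by auto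
    have x: "x \<in> D" using insert by auto
    have "jn x m \<in> D" "le x (jn x m)" "le m (jn x m)" using cl[OF x m(1)] by auto
    then show ?case using m x tr insert.prems by (metis insert_iff subsetD)
  qed
  then show ?thesis using assms by blast
qed

definition lmeet :: "'b set \<Rightarrow> ('b \<Rightarrow> 'b \<Rightarrow> bool) \<Rightarrow> 'b \<Rightarrow> 'b \<Rightarrow> 'b" where
  "lmeet L le x y = (THE z. is_glb L le x y z)"

context
  fixes L :: "'b set" and le :: "'b \<Rightarrow> 'b \<Rightarrow> bool"
  assumes FL: "finite_lattice_on L le"
begin

lemma FL_p1: "finite L"
  using FL unfolding finite_lattice_on_def by (elim conjE) assumption
lemma FL_p2: "L \<noteq> {}"
  using FL unfolding finite_lattice_on_def by (elim conjE) assumption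
lemma FL_p3: "\<forall>x\<in>L. le x x"
  using FL unfolding finite_lattice_on_def by (elim conjE) assumption
lemma FL_p4: "\<forall>x\<in>L. \<forall>y\<in>L. le x y \<and> le y x \<longrightarrow> x = y"
  using FL unfolding finite_lattice_on_def by (elim conjE) assumption
lemma FL_p5: "\<forall>x\<in>L. \<forall>y\<in>L. \<forall>z\<in>L. le x y \<and> le y z \<longrightarrow> le x z"
  using FL unfolding finite_lattice_on_def by (elim conjE) assumption
lemma FL_p6: "\<forall>x\<in>L. \<forall>y\<in>L. (\<exists>z. is_lub L le x y z) \<and> (\<exists>z. is_glb L le x y z)"
  using FL unfolding finite_lattice_on_def by (elim conjE) assumption

lemma L_fin: "finite L" by (rule FL_p1)
lemma L_ne: "L \<noteq> {}" by (rule FL_p2)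
lemma L_refl: "x \<in> L \<Longrightarrow> le x x" using FL_p3 by blast
lemma L_antisym: "x \<in> L \<Longrightarrow> y \<in> L \<Longrightarrow> le x y \<Longrightarrow> le y x \<Longrightarrow> x = y"
  using FL_p4 by blast
lemma L_trans: "x \<in> L \<Longrightarrow> y \<in> L \<Longrightarrow> z \<in> L \<Longrightarrow> le x y \<Longrightarrow> le y z \<Longrightarrow> le x z"
  using FL_p5 by blast
lemma L_lubex: "x \<in> L \<Longrightarrow> y \<in> L \<Longrightarrow> \<exists>z. is_lub L le x y z" using FL_p6 by blast
lemma L_glbex: "x \<in> L \<Longrightarrow> y \<in> L \<Longrightarrow> \<exists>z. is_glb L le x y z" using FL_p6 by blast

lemma lub_ex1: "x \<in> L \<Longrightarrow> y \<in> L \<Longrightarrow> \<exists>!z. is_lub L le x y z"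
proof -
  assume "x \<in> L" "y \<in> L"
  then obtain z where "is_lub L le x y z" using L_lubex by blast
  moreover have "z' = z" if "is_lub L le x y z'" for z'
    using that \<open>is_lub L le x y z\<close> L_antisym unfolding is_lub_def by blast
  ultimately show ?thesis by blast
qed

lemma glb_ex1: "x \<in> L \<Longrightarrow> y \<in> L \<Longrightarrow> \<exists>!z. is_glb L le x y z"
proof -
  assume "x \<in> L" "y \<in> L"
  then obtain z where "is_glb L le x y z" using L_glbex by blast
  moreover have "z' = z" if "is_glb L le x y z'" for z'
    using that \<open>is_glb L le x y z\<close> L_antisym unfolding is_glb_def by blast
  ultimately show ?thesis by blast
qed

lemma ljoin_lub: "x \<in> L \<Longrightarrow> y \<in> L \<Longrightarrow> is_lub L le x y (ljoin L le x y)"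
  unfolding ljoin_def by (rule theI', rule lub_ex1)

lemma lmeet_glb: "x \<in> L \<Longrightarrow> y \<in> L \<Longrightarrow> is_glb L le x y (lmeet L le x y)"
  unfolding lmeet_def by (rule theI', rule glb_ex1)

lemma ljoin_eq: "x \<in> L \<Longrightarrow> y \<in> L \<Longrightarrow> is_lub L le x y z \<Longrightarrow> ljoin L le x y = z"
  using ljoin_lub lub_ex1 by blast

lemma ljoin_in: "x \<in> L \<Longrightarrow> y \<in> L \<Longrightarrow> ljoin L le x y \<in> L"
  using ljoin_lub unfolding is_lub_def by blast
lemma ljoin_ub1: "x \<in> L \<Longrightarrow> y \<in> L \<Longrightarrow> le x (ljoin L le x y)"
  using ljoin_lub unfolding is_lub_def by blast
lemma ljoin_ub2: "x \<in> L \<Longrightarrow> y \<in> L \<Longrightarrow> le y (ljoin L le x y)"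
  using ljoin_lub unfolding is_lub_def by blast
lemma ljoin_least: "x \<in> L \<Longrightarrow> y \<in> L \<Longrightarrow> w \<in> L \<Longrightarrow> le x w \<Longrightarrow> le y w \<Longrightarrow> le (ljoin L le x y) w"
  using ljoin_lub unfolding is_lub_def by blast
lemma ljoin_le_iff: "x \<in> L \<Longrightarrow> y \<in> L \<Longrightarrow> w \<in> L \<Longrightarrow> le (ljoin L le x y) w \<longleftrightarrow> le x w \<and> le y w"
  by (meson L_trans ljoin_in ljoin_least ljoin_ub1 ljoin_ub2)

lemma lmeet_in: "x \<in> L \<Longrightarrow> y \<in> L \<Longrightarrow> lmeet L le x y \<in> L"
  using lmeet_glb unfolding is_glb_def by blast
lemma lmeet_lb1: "x \<in> L \<Longrightarrow> y \<in> L \<Longrightarrow> le (lmeet L le x y) x"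
  using lmeet_glb unfolding is_glb_def by blast
lemma lmeet_lb2: "x \<in> L \<Longrightarrow> y \<in> L \<Longrightarrow> le (lmeet L le x y) y"
  using lmeet_glb unfolding is_glb_def by blast

lemma co_yoneda: "u \<in> L \<Longrightarrow> v \<in> L \<Longrightarrow> (\<And>w. w \<in> L \<Longrightarrow> le u w \<longleftrightarrow> le v w) \<Longrightarrow> u = v"
  by (meson L_antisym L_refl)

lemma top_ex: "\<exists>m\<in>L. \<forall>z\<in>L. le z m"
proof (rule gmax[where jn="ljoin L le"])
  show "finite L" "L \<noteq> {}" by (rule L_fin, rule L_ne)
  show "\<And>x. x \<in> L \<Longrightarrow> le x x" by (rule L_refl)
  show "\<And>x y. x \<in> L \<Longrightarrow> y \<in> L \<Longrightarrow> ljoin L le x y \<in> L \<and> le x (ljoin L le x y) \<and> le y (ljoin L le x y)"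
    by (simp add: ljoin_in ljoin_ub1 ljoin_ub2)
  show "\<And>x y z. x \<in> L \<Longrightarrow> y \<in> L \<Longrightarrow> z \<in> L \<Longrightarrow> le x y \<Longrightarrow> le y z \<Longrightarrow> le x z"
    by (rule L_trans)
qed

lemma bot_ex: "\<exists>m\<in>L. \<forall>z\<in>L. le m z"
proof (rule gmax[where jn="lmeet L le" and le="\<lambda>x y. le y x"])
  show "finite L" "L \<noteq> {}" by (rule L_fin, rule L_ne)
  show "\<And>x. x \<in> L \<Longrightarrow> le x x" by (rule L_refl)
  show "\<And>x y. x \<in> L \<Longrightarrow> y \<in> L \<Longrightarrow> lmeet L le x y \<in> L \<and> le (lmeet L le x y) x \<and> le (lmeet L le x y) y"
    by (simp add: lmeet_in lmeet_lb1 lmeet_lb2)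
  show "\<And>x y z. x \<in> L \<Longrightarrow> y \<in> L \<Longrightarrow> z \<in> L \<Longrightarrow> le y x \<Longrightarrow> le z y \<Longrightarrow> le z x"
    by (rule L_trans)
qed

lemma ltop_prop: "ltop L le \<in> L \<and> (\<forall>x\<in>L. le x (ltop L le))"
proof -
  obtain m where "m \<in> L" "\<forall>z\<in>L. le z m" using top_ex by blast
  then have "\<exists>!m. m \<in> L \<and> (\<forall>z\<in>L. le z m)" using L_antisym by blast
  then show ?thesis unfolding ltop_def by (rule theI')
qed

lemma lbot_prop: "lbot L le \<in> L \<and> (\<forall>x\<in>L. le (lbot L le) x)"
proof -
  obtain m where "m \<in> L" "\<forall>z\<in>L. le m z" using bot_ex by blast
  then have "\<exists>!m. m \<in> L \<and> (\<forall>z\<in>L. le m z)" using L_antisym by blast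
  then show ?thesis unfolding lbot_def by (rule theI')
qed

lemma ltop_in: "ltop L le \<in> L" using ltop_prop by blast
lemma lbot_in: "lbot L le \<in> L" using lbot_prop by blast
lemma le_ltop: "x \<in> L \<Longrightarrow> le x (ltop L le)" using ltop_prop by blast
lemma lbot_le: "x \<in> L \<Longrightarrow> le (lbot L le) x" using lbot_prop by blast

lemma ljoin_comm: "x \<in> L \<Longrightarrow> y \<in> L \<Longrightarrow> ljoin L le x y = ljoin L le y x"
  by (rule co_yoneda) (auto simp: ljoin_in ljoin_le_iff)
lemma ljoin_assoc: "x \<in> L \<Longrightarrow> y \<in> L \<Longrightarrow> z \<in> L \<Longrightarrow>
   ljoin L le (ljoin L le x y) z = ljoin L le x (ljoin L le y z)"
  by (rule co_yoneda) (auto simp: ljoin_in ljoin_le_iff)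
lemma ljoin_absorb: "x \<in> L \<Longrightarrow> y \<in> L \<Longrightarrow> le x y \<Longrightarrow> ljoin L le x y = y"
  by (rule co_yoneda) (simp_all add: ljoin_in ljoin_le_iff, meson L_trans)
lemma ljoin_idem: "x \<in> L \<Longrightarrow> ljoin L le x x = x"
  by (simp add: ljoin_absorb L_refl)
lemma ljoin_absorb2: "x \<in> L \<Longrightarrow> y \<in> L \<Longrightarrow> le y x \<Longrightarrow> ljoin L le x y = x"
  using ljoin_absorb ljoin_comm by metis
lemma ljoin_top: "x \<in> L \<Longrightarrow> ljoin L le x (ltop L le) = ltop L le"
  by (simp add: ljoin_absorb le_ltop ltop_in)
lemma ljoin_top2: "x \<in> L \<Longrightarrow> ljoin L le (ltop L le) x = ltop L le"
  by (simp add: ljoin_absorb2 le_ltop ltop_in)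
lemma ljoin_bot: "x \<in> L \<Longrightarrow> ljoin L le (lbot L le) x = x"
  by (simp add: ljoin_absorb lbot_le lbot_in)
lemma ljoin_bot2: "x \<in> L \<Longrightarrow> ljoin L le x (lbot L le) = x"
  by (simp add: ljoin_absorb2 lbot_le lbot_in)
lemma le_lbot_iff: "x \<in> L \<Longrightarrow> le x (lbot L le) \<longleftrightarrow> x = lbot L le"
  using L_antisym lbot_le lbot_in L_refl by blast
lemma ljoin_eq_bot: "x \<in> L \<Longrightarrow> y \<in> L \<Longrightarrow> ljoin L le x y = lbot L le \<Longrightarrow> y = lbot L le"
  by (metis le_lbot_iff ljoin_ub2)

lemma Res1_fun: "f \<in> Res1 L le \<Longrightarrow> x \<in> L \<Longrightarrow> f x \<in> L"
  unfolding Res1_def by auto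
lemma Res1_ext: "f \<in> Res1 L le \<Longrightarrow> x \<notin> L \<Longrightarrow> f x = undefined"
  unfolding Res1_def by auto
lemma Res1_join: "f \<in> Res1 L le \<Longrightarrow> x \<in> L \<Longrightarrow> y \<in> L \<Longrightarrow> f (ljoin L le x y) = ljoin L le (f x) (f y)"
  unfolding Res1_def by auto
lemma Res1_bot: "f \<in> Res1 L le \<Longrightarrow> f (lbot L le) = lbot L le"
  unfolding Res1_def by auto
lemma Res1_top: "f \<in> Res1 L le \<Longrightarrow> f (ltop L le) = ltop L le"
  unfolding Res1_def by auto
lemma Res1_mono: "f \<in> Res1 L le \<Longrightarrow> x \<in> L \<Longrightarrow> y \<in> L \<Longrightarrow> le x y \<Longrightarrow> le (f x) (f y)"
  by (metis Res1_fun Res1_join ljoin_absorb ljoin_ub1)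

end



lemma fab_val: "x \<in> L \<Longrightarrow> fab L le a b x = (if le x a then b else ltop L le)"
  unfolding fab_def by simp
lemma fcomp_val: "x \<in> L \<Longrightarrow> fcomp L f h x = f (h x)"
  unfolding fcomp_def compose_def by simp
lemma fjoin_val: "x \<in> L \<Longrightarrow> fjoin L le f h x = ljoin L le (f x) (h x)"
  unfolding fjoin_def by simp
lemma fab_ext: "fab L le a b \<in> extensional L" unfolding fab_def by simp
lemma fcomp_ext: "fcomp L f h \<in> extensional L" unfolding fcomp_def compose_def by simp
lemma fjoin_ext: "fjoin L le f h \<in> extensional L" unfolding fjoin_def by simp
lemma Res1_extensional: "f \<in> Res1 L le \<Longrightarrow> f \<in> extensional L"
  unfolding Res1_def by (auto simp: PiE_iff)

context
  fixes L :: "'b set" and le and R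
  assumes GP: "good_pair L le R"
begin

abbreviation "Z \<equiv> lbot L le"
abbreviation "T \<equiv> ltop L le"
abbreviation "G \<equiv> fab L le Z Z"

lemma FL: "finite_lattice_on L le" using GP unfolding good_pair_def by blast
lemma cardL: "card L > 2" using GP unfolding good_pair_def by blast
lemma SUB: "subsemiring_Res1 L le R" using GP unfolding good_pair_def by blast
lemma cond_i: "a \<in> L \<Longrightarrow> a \<noteq> T \<Longrightarrow> fab L le a Z \<in> R"
  using GP unfolding good_pair_def by blast
lemma cond_ii: "f \<in> R \<Longrightarrow> \<exists>a\<in>L - {T}. \<forall>x\<in>L. le (fab L le a Z x) (f x)"
  using GP unfolding good_pair_def by blast
lemma cond_iii: "a \<in> L \<Longrightarrow> a \<noteq> Z \<Longrightarrow> a \<noteq> T \<Longrightarrow> b \<in> L \<Longrightarrow> \<exists>f\<in>R. f a = b"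
  using GP unfolding good_pair_def by blast

lemma R_Res1: "f \<in> R \<Longrightarrow> f \<in> Res1 L le" using SUB unfolding subsemiring_Res1_def by blast
lemma R_ne: "R \<noteq> {}" using SUB unfolding subsemiring_Res1_def by blast
lemma R_join: "f \<in> R \<Longrightarrow> h \<in> R \<Longrightarrow> fjoin L le f h \<in> R" using SUB unfolding subsemiring_Res1_def by blast
lemma R_comp: "f \<in> R \<Longrightarrow> h \<in> R \<Longrightarrow> fcomp L f h \<in> R" using SUB unfolding subsemiring_Res1_def by blast

lemmas refl' = L_refl[OF FL] and antisym' = L_antisym[OF FL] and trans' = L_trans[OF FL]
lemmas jin = ljoin_in[OF FL] and jub1 = ljoin_ub1[OF FL] and jub2 = ljoin_ub2[OF FL]
lemmas jcomm = ljoin_comm[OF FL] and jassoc = ljoin_assoc[OF FL] and jidem = ljoin_idem[OF FL]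
lemmas jabs = ljoin_absorb[OF FL] and jabs2 = ljoin_absorb2[OF FL]
lemmas jtop = ljoin_top[OF FL] and jtop2 = ljoin_top2[OF FL] and jbot = ljoin_bot[OF FL] and jbot2 = ljoin_bot2[OF FL]
lemmas Zin = lbot_in[OF FL] and Tin = ltop_in[OF FL] and Zle = lbot_le[OF FL] and leT = le_ltop[OF FL]
lemmas leZ = le_lbot_iff[OF FL] and jeqZ = ljoin_eq_bot[OF FL]
lemmas rfun = Res1_fun[OF FL] and rjoin = Res1_join[OF FL] and rbot = Res1_bot[OF FL] and rtop = Res1_top[OF FL]
  and rmono = Res1_mono[OF FL]

lemma Rfun: "f \<in> R \<Longrightarrow> x \<in> L \<Longrightarrow> f x \<in> L" using rfun R_Res1 by blast
lemma Rext: "f \<in> R \<Longrightarrow> f \<in> extensional L" using Res1_extensional R_Res1 by blast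

lemma Z_ne_T: "Z \<noteq> T"
proof
  assume e: "Z = T"
  have "\<forall>x\<in>L. x = Z" using e Zle leT antisym' Zin by metis
  then have "L \<subseteq> {Z}" by blast
  then have "card L \<le> card {Z}" by (intro card_mono) auto
  then have "card L \<le> 1" by simp
  then show False using cardL by simp
qed

lemma mid_ex: "\<exists>a\<in>L. a \<noteq> Z \<and> a \<noteq> T"
proof (rule ccontr)
  assume "\<not> ?thesis"
  then have "L \<subseteq> {Z, T}" by blast
  then have "card L \<le> card {Z, T}" by (intro card_mono) auto
  also have "\<dots> \<le> 2" by (simp add: card_insert_le_m1)
  finally show False using cardL by simp
qed

lemma G_val: "x \<in> L \<Longrightarrow> G x = (if x = Z then Z else T)"
  by (simp add: fab_val leZ)

lemma G_in: "G \<in> R" using cond_i Zin Z_ne_T by blast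

lemma eqR: "f \<in> extensional L \<Longrightarrow> h \<in> extensional L \<Longrightarrow> (\<And>x. x \<in> L \<Longrightarrow> f x = h x) \<Longrightarrow> f = h"
  by (rule extensionalityI)

lemma semiring_R: "semiring R (fjoin L le) (fcomp L)"
  unfolding semiring_def
proof (intro conjI ballI)
  show "R \<noteq> {}" by (rule R_ne)
next
  fix x y assume "x \<in> R" "y \<in> R"
  then show "fjoin L le x y \<in> R" "fcomp L x y \<in> R" by (auto intro: R_join R_comp)
next
  fix x y z assume a: "x \<in> R" "y \<in> R" "z \<in> R"
  show "fjoin L le (fjoin L le x y) z = fjoin L le x (fjoin L le y z)"
    by (rule eqR[OF fjoin_ext fjoin_ext]) (simp add: fjoin_val a Rfun jin jassoc)
  show "fcomp L (fcomp L x y) z = fcomp L x (fcomp L y z)"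
    by (rule eqR[OF fcomp_ext fcomp_ext]) (simp add: fcomp_val a Rfun)
  show "fcomp L x (fjoin L le y z) = fjoin L le (fcomp L x y) (fcomp L x z)"
    by (rule eqR[OF fcomp_ext fjoin_ext]) (simp add: fcomp_val fjoin_val a Rfun rjoin R_Res1)
  show "fcomp L (fjoin L le x y) z = fjoin L le (fcomp L x z) (fcomp L y z)"
    by (rule eqR[OF fcomp_ext fjoin_ext]) (simp add: fcomp_val fjoin_val a Rfun)
next
  fix x y assume a: "x \<in> R" "y \<in> R"
  show "fjoin L le x y = fjoin L le y x"
    by (rule eqR[OF fjoin_ext fjoin_ext]) (simp add: fjoin_val a Rfun jcomm)
qed

lemma idem_R: "add_idempotent R (fjoin L le)"
  unfolding add_idempotent_def
proof
  fix x assume a: "x \<in> R"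
  show "fjoin L le x x = x"
    by (rule eqR[OF fjoin_ext Rext[OF a]]) (simp add: fjoin_val a Rfun jidem)
qed

lemma finite_R: "finite R"
proof -
  have "R \<subseteq> L \<rightarrow>\<^sub>E L" using R_Res1 unfolding Res1_def by blast
  moreover have "finite (L \<rightarrow>\<^sub>E L)" by (rule finite_PiE) (auto simp: L_fin[OF FL])
  ultimately show ?thesis by (rule finite_subset)
qed

lemma G_top: "f \<in> R \<Longrightarrow> fjoin L le f G = G"
  by (rule eqR[OF fjoin_ext fab_ext]) (simp add: fjoin_val G_val Rfun jtop rbot R_Res1 jidem Zin)

lemma G_rabs: "f \<in> R \<Longrightarrow> fcomp L f G = G"
  by (rule eqR[OF fcomp_ext fab_ext]) (simp add: fcomp_val G_val rbot rtop R_Res1)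

lemma absorb_part: "\<exists>g. greatest_elem R (fjoin L le) g \<and> right_absorbing R (fcomp L) g \<and>
                 \<not> left_absorbing R (fcomp L) g"
proof (intro exI conjI)
  show "greatest_elem R (fjoin L le) G" unfolding greatest_elem_def using G_in G_top by blast
  show "right_absorbing R (fcomp L) G" unfolding right_absorbing_def using G_rabs by blast
  obtain a where a: "a \<in> L" "a \<noteq> Z" "a \<noteq> T" using mid_ex by blast
  have f: "fab L le a Z \<in> R" using cond_i a by blast
  have "fcomp L G (fab L le a Z) a = Z" using a by (simp add: fcomp_val fab_val refl' G_val Zin)
  moreover have "G a = T" using a by (simp add: G_val)
  ultimately have "fcomp L G (fab L le a Z) \<noteq> G" using Z_ne_T by metis
  then show "\<not> left_absorbing R (fcomp L) G" unfolding left_absorbing_def using f by blast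
qed


lemma fab_tv: "a \<in> L \<Longrightarrow> y \<in> L \<Longrightarrow> fab L le a Z y = Z \<or> fab L le a Z y = T"
  by (simp add: fab_val)

lemma join_tv: "a = Z \<or> a = T \<Longrightarrow> b = Z \<or> b = T \<Longrightarrow> ljoin L le a b = Z \<or> ljoin L le a b = T"
  using jidem[OF Zin] jidem[OF Tin] jtop[OF Zin] jtop2[OF Zin] jtop[OF Tin] by auto

lemma to_all:
  assumes EQ: "equiv R r"
    and CPH: "\<forall>x y u v. (x,y)\<in>r \<longrightarrow> (u,v)\<in>r \<longrightarrow> (fjoin L le x u, fjoin L le y v) \<in> r \<and> (fcomp L x u, fcomp L y v) \<in> r"
    and u: "u \<in> R" "\<forall>y\<in>L. u y = Z \<or> u y = T"
    and v: "v \<in> R"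
    and uv: "(u,v) \<in> r" and x: "x \<in> L" "u x = T" "v x = Z"
  shows "f \<in> R \<Longrightarrow> (f, G) \<in> r"
proof -
  have CP: "\<And>x y u v. (x,y)\<in>r \<Longrightarrow> (u,v)\<in>r \<Longrightarrow> (fjoin L le x u, fjoin L le y v) \<in> r \<and> (fcomp L x u, fcomp L y v) \<in> r"
    using CPH by blast
  have rrefl: "\<And>x. x \<in> R \<Longrightarrow> (x,x) \<in> r" using EQ by (meson equivE refl_onD)
  have rsym: "\<And>x y. (x,y) \<in> r \<Longrightarrow> (y,x) \<in> r" using EQ by (meson equivE symD)
  have rtrans: "\<And>x y z. (x,y) \<in> r \<Longrightarrow> (y,z) \<in> r \<Longrightarrow> (x,z) \<in> r" using EQ by (meson equivE transD)
  have claim: "\<forall>W. W \<in> R \<longrightarrow> (\<forall>y\<in>L. W y = Z \<or> W y = T) \<longrightarrow> card {y\<in>L. W y = Z} \<le> n \<longrightarrow> (W, G) \<in> r" for n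
  proof (induction n)
    case 0
    show ?case
    proof (intro allI impI)
      fix W assume W: "W \<in> R" "card {y\<in>L. W y = Z} \<le> 0"
      have "Z \<in> {y\<in>L. W y = Z}" using W rbot R_Res1 Zin by auto
      moreover have "finite {y\<in>L. W y = Z}" using L_fin[OF FL] by simp
      ultimately have "card {y\<in>L. W y = Z} > 0" by (metis card_gt_0_iff empty_iff)
      then show "(W, G) \<in> r" using W by simp
    qed
  next
    case (Suc n)
    show ?case
    proof (intro allI impI)
      fix W assume W: "W \<in> R" "\<forall>y\<in>L. W y = Z \<or> W y = T" "card {y\<in>L. W y = Z} \<le> Suc n"
      define Zs where "Zs = {y\<in>L. W y = Z}"
      have finZs: "finite Zs" unfolding Zs_def using L_fin[OF FL] by simp
      have ZZs: "Z \<in> Zs" unfolding Zs_def using W rbot R_Res1 Zin by auto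
      show "(W, G) \<in> r"
      proof (cases "Zs = {Z}")
        case True
        have "W = G"
        proof (rule eqR[OF Rext[OF W(1)] fab_ext])
          fix y assume y: "y \<in> L"
          show "W y = G y"
          proof (cases "y = Z")
            case True then show ?thesis using W(1) rbot R_Res1 Zin by (simp add: G_val)
          next
            case False
            then have "y \<notin> Zs" using \<open>Zs = {Z}\<close> by blast
            then have "W y = T" using W(2) y unfolding Zs_def by blast
            then show ?thesis using False y by (simp add: G_val)
          qed
        qed
        then show ?thesis using rrefl G_in by simp
      next
        case False
        obtain w where w: "w \<in> Zs" "\<forall>y\<in>Zs. le y w"
        proof -
          have "\<exists>m\<in>Zs. \<forall>z\<in>Zs. le z m"
          proof (rule gmax[where jn="ljoin L le"])
            show "finite Zs" "Zs \<noteq> {}" using finZs ZZs by auto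
            show "\<And>x. x \<in> Zs \<Longrightarrow> le x x" unfolding Zs_def using refl' by blast
            show "\<And>x y. x \<in> Zs \<Longrightarrow> y \<in> Zs \<Longrightarrow> ljoin L le x y \<in> Zs \<and> le x (ljoin L le x y) \<and> le y (ljoin L le x y)"
            proof -
              fix x y assume "x \<in> Zs" "y \<in> Zs"
              then have xy: "x \<in> L" "y \<in> L" "W x = Z" "W y = Z" unfolding Zs_def by auto
              have "W (ljoin L le x y) = Z" using rjoin[OF R_Res1[OF W(1)] xy(1,2)] xy(3,4) jidem[OF Zin] by simp
              then show "ljoin L le x y \<in> Zs \<and> le x (ljoin L le x y) \<and> le y (ljoin L le x y)"
                unfolding Zs_def using jin[OF xy(1,2)] jub1[OF xy(1,2)] jub2[OF xy(1,2)] by blast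
            qed
            show "\<And>x y z. x \<in> Zs \<Longrightarrow> y \<in> Zs \<Longrightarrow> z \<in> Zs \<Longrightarrow> le x y \<Longrightarrow> le y z \<Longrightarrow> le x z"
              unfolding Zs_def using trans' by blast
          qed
          then show ?thesis using that by blast
        qed
        have wL: "w \<in> L" "W w = Z" using w unfolding Zs_def by auto
        have wZ: "w \<noteq> Z"
        proof
          assume "w = Z"
          then have "Zs \<subseteq> {Z}" using w leZ unfolding Zs_def by blast
          then show False using False ZZs by blast
        qed
        have wT: "w \<noteq> T"
        proof
          assume "w = T" then have "W w = T" using rtop[OF R_Res1[OF W(1)]] by simp
          then show False using wL Z_ne_T by simp
        qed
        obtain k where k: "k \<in> R" "k w = x" using cond_iii[OF wL(1) wZ wT x(1)] by blast
        define U where "U = fjoin L le (fcomp L u k) W"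
        define V where "V = fjoin L le (fcomp L v k) W"
        have "(fcomp L u k, fcomp L v k) \<in> r" using CP[OF uv rrefl[OF k(1)]] by blast
        then have UV: "(U, V) \<in> r" unfolding U_def V_def using CP[OF _ rrefl[OF W(1)]] by blast
        have VW: "V = W"
        proof (rule eqR[OF _ Rext[OF W(1)]])
          show "V \<in> extensional L" unfolding V_def by (rule fjoin_ext)
          fix y assume y: "y \<in> L"
          have kyL: "k y \<in> L" using Rfun k y by blast
          show "V y = W y"
          proof (cases "W y = Z")
            case True
            then have "le y w" using w y unfolding Zs_def by blast
            then have "le (k y) x" using rmono[OF R_Res1[OF k(1)] y wL(1)] k by simp
            then have "le (v (k y)) (v x)" using rmono[OF R_Res1[OF v] kyL x(1)] by simp
            then have "v (k y) = Z" using x(3) leZ[OF Rfun[OF v kyL]] by simp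
            then show ?thesis unfolding V_def using True y by (simp add: fjoin_val fcomp_val jidem Zin)
          next
            case False
            then have "W y = T" using W(2) y by blast
            then show ?thesis unfolding V_def using y Rfun v kyL by (simp add: fjoin_val fcomp_val jtop)
          qed
        qed
        have UR: "U \<in> R" unfolding U_def by (rule R_join[OF R_comp[OF u(1) k(1)] W(1)])
        have Utv: "\<forall>y\<in>L. U y = Z \<or> U y = T"
        proof
          fix y assume y: "y \<in> L"
          have "u (k y) = Z \<or> u (k y) = T" using u Rfun k y by blast
          then show "U y = Z \<or> U y = T" unfolding U_def using y W(2) join_tv by (simp add: fjoin_val fcomp_val)
        qed
        have sub: "{y\<in>L. U y = Z} \<subset> Zs"
        proof
          show "{y\<in>L. U y = Z} \<subseteq> Zs"
          proof
            fix y assume "y \<in> {y\<in>L. U y = Z}"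
            then have y: "y \<in> L" "U y = Z" by auto
            then have "ljoin L le (u (k y)) (W y) = Z" unfolding U_def by (simp add: fjoin_val fcomp_val)
            then have "W y = Z" using jeqZ[OF Rfun[OF u(1) Rfun[OF k(1) y(1)]] Rfun[OF W(1) y(1)]] by blast
            then show "y \<in> Zs" unfolding Zs_def using y by blast
          qed
          have "U w = T" unfolding U_def using wL k x by (simp add: fjoin_val fcomp_val jtop2 Zin)
          then have "w \<notin> {y\<in>L. U y = Z}" using Z_ne_T by auto
          then show "{y\<in>L. U y = Z} \<noteq> Zs" using w by blast
        qed
        have "card {y\<in>L. U y = Z} < card Zs" by (rule psubset_card_mono[OF finZs sub])
        then have "card {y\<in>L. U y = Z} \<le> n" using W(3) unfolding Zs_def by simp
        then have "(U, G) \<in> r" using Suc.IH UR Utv by blast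
        moreover have "(W, U) \<in> r" using UV VW rsym by simp
        ultimately show ?thesis using rtrans by blast
      qed
    qed
  qed
  assume f: "f \<in> R"
  obtain a where a: "a \<in> L - {T}" "\<forall>x\<in>L. le (fab L le a Z x) (f x)" using cond_ii[OF f] by blast
  have F: "fab L le a Z \<in> R" using cond_i a by blast
  have "card {y\<in>L. fab L le a Z y = Z} \<le> card L" by (rule card_mono[OF L_fin[OF FL]]) auto
  then have "(fab L le a Z, G) \<in> r" using claim F fab_tv a by blast
  then have "(fjoin L le f (fab L le a Z), fjoin L le f G) \<in> r" using CP[OF rrefl[OF f]] by blast
  moreover have "fjoin L le f (fab L le a Z) = f"
  proof (rule eqR[OF fjoin_ext Rext[OF f]])
    fix y assume y: "y \<in> L"
    have "fab L le a Z y \<in> L" using y by (simp add: fab_val Zin Tin)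
    then show "fjoin L le f (fab L le a Z) y = f y" using a y Rfun f by (simp add: fjoin_val jabs2)
  qed
  ultimately show "(f, G) \<in> r" using G_top f by simp
qed

lemma simple_R: "simple_semiring R (fjoin L le) (fcomp L)"
  unfolding simple_semiring_def
proof (intro allI impI)
  fix r assume C: "semiring_congruence R (fjoin L le) (fcomp L) r"
  have EQ: "equiv R r" using C unfolding semiring_congruence_def by blast
  have CPH: "\<forall>x y u v. (x,y)\<in>r \<longrightarrow> (u,v)\<in>r \<longrightarrow> (fjoin L le x u, fjoin L le y v) \<in> r \<and> (fcomp L x u, fcomp L y v) \<in> r"
    using C unfolding semiring_congruence_def by blast
  have CP: "\<And>x y u v. (x,y)\<in>r \<Longrightarrow> (u,v)\<in>r \<Longrightarrow> (fjoin L le x u, fjoin L le y v) \<in> r \<and> (fcomp L x u, fcomp L y v) \<in> r"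
    using CPH by blast
  have rsub: "r \<subseteq> R \<times> R" using EQ by (rule equiv_type)
  have rrefl: "\<And>x. x \<in> R \<Longrightarrow> (x,x) \<in> r" using EQ by (meson equivE refl_onD)
  have rsym: "\<And>x y. (x,y) \<in> r \<Longrightarrow> (y,x) \<in> r" using EQ by (meson equivE symD)
  have rtrans: "\<And>x y z. (x,y) \<in> r \<Longrightarrow> (y,z) \<in> r \<Longrightarrow> (x,z) \<in> r" using EQ by (meson equivE transD)
  show "r = Id_on R \<or> r = R \<times> R"
  proof (cases "r \<subseteq> Id")
    case True
    then have "r = Id_on R" using rsub rrefl by auto
    then show ?thesis by blast
  next
    case False
    have key: "r = R \<times> R" if fh: "(f,h) \<in> r" and x: "x \<in> L" and nle: "\<not> le (f x) (h x)" for f h x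
    proof -
      have f: "f \<in> R" and h: "h \<in> R" using fh rsub by auto
      define p where "p = h x"
      have pL: "p \<in> L" unfolding p_def using Rfun h x by blast
      have pT: "p \<noteq> T" using nle leT Rfun f x unfolding p_def by metis
      define F where "F = fab L le p Z"
      have F: "F \<in> R" unfolding F_def using cond_i pL pT by blast
      define u where "u = fcomp L F f"
      define v where "v = fcomp L F h"
      have uv: "(u,v) \<in> r" unfolding u_def v_def using CP[OF rrefl[OF F] fh] by blast
      have uR: "u \<in> R" "v \<in> R" unfolding u_def v_def using R_comp F f h by auto
      have utv: "\<forall>y\<in>L. u y = Z \<or> u y = T" unfolding u_def F_def
        using Rfun f by (simp add: fcomp_val fab_val)
      have ux: "u x = T" unfolding u_def F_def using x nle p_def Rfun[OF f x] by (simp add: fcomp_val fab_val)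
      have vx: "v x = Z" unfolding v_def F_def using x pL refl' p_def Rfun[OF h x] by (simp add: fcomp_val fab_val)
      have all: "\<And>g. g \<in> R \<Longrightarrow> (g, G) \<in> r"
        using to_all[OF EQ CPH uR(1) utv uR(2) uv x ux vx] by blast
      show ?thesis
      proof
        show "r \<subseteq> R \<times> R" by (rule rsub)
        show "R \<times> R \<subseteq> r"
        proof
          fix q assume "q \<in> R \<times> R"
          then obtain a b where q: "q = (a,b)" "a \<in> R" "b \<in> R" by blast
          have "(a, G) \<in> r" "(G, b) \<in> r" using all q rsym by auto
          then show "q \<in> r" using rtrans q by blast
        qed
      qed
    qed
    obtain f h where fh: "(f,h) \<in> r" "f \<noteq> h" using False by auto
    have f: "f \<in> R" and h: "h \<in> R" using fh rsub by auto
    obtain x where x: "x \<in> L" "f x \<noteq> h x" using eqR[OF Rext[OF f] Rext[OF h]] fh(2) by blast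
    show ?thesis
    proof (cases "le (f x) (h x)")
      case False then show ?thesis using key[OF fh(1) x(1)] by blast
    next
      case True
      then have "\<not> le (h x) (f x)" using antisym' Rfun f h x by metis
      then show ?thesis using key[OF rsym[OF fh(1)] x(1)] by blast
    qed
  qed
qed

lemma dir1: "finite R \<and> semiring R (fjoin L le) (fcomp L) \<and>
            simple_semiring R (fjoin L le) (fcomp L) \<and>
            add_idempotent R (fjoin L le) \<and>
            (\<exists>g. greatest_elem R (fjoin L le) g \<and> right_absorbing R (fcomp L) g \<and>
                 \<not> left_absorbing R (fcomp L) g)"
  using finite_R semiring_R simple_R idem_R absorb_part by blast

end



definition Aset :: "'a set \<Rightarrow> ('a \<Rightarrow> 'a \<Rightarrow> 'a) \<Rightarrow> 'a set" where
  "Aset S mul = {h\<in>S. \<forall>s\<in>S. mul s h = h}"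
definition Xset :: "'a set \<Rightarrow> ('a \<Rightarrow> 'a \<Rightarrow> 'a) \<Rightarrow> 'a option set" where
  "Xset S mul = insert None (Some ` Aset S mul)"
definition leM :: "('a \<Rightarrow> 'a \<Rightarrow> 'a) \<Rightarrow> 'a option \<Rightarrow> 'a option \<Rightarrow> bool" where
  "leM add x y = (case x of None \<Rightarrow> True | Some a \<Rightarrow> (case y of None \<Rightarrow> False | Some b \<Rightarrow> add a b = b))"
definition mjoin :: "('a \<Rightarrow> 'a \<Rightarrow> 'a) \<Rightarrow> 'a option \<Rightarrow> 'a option \<Rightarrow> 'a option" where
  "mjoin add x y = (case x of None \<Rightarrow> y | Some a \<Rightarrow> (case y of None \<Rightarrow> x | Some b \<Rightarrow> Some (add a b)))"
definition rho :: "('a \<Rightarrow> 'a \<Rightarrow> 'a) \<Rightarrow> 'a \<Rightarrow> 'a option \<Rightarrow> 'a option" where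
  "rho mul s x = map_option (\<lambda>h. mul h s) x"
definition Fs :: "'a set \<Rightarrow> ('a \<Rightarrow> 'a \<Rightarrow> 'a) \<Rightarrow> ('a \<Rightarrow> 'a \<Rightarrow> 'a) \<Rightarrow> 'a \<Rightarrow> 'a option \<Rightarrow> 'a option" where
  "Fs S add mul s y = (THE x. x \<in> Xset S mul \<and> leM add (rho mul s x) y \<and>
      (\<forall>z\<in>Xset S mul. leM add (rho mul s z) y \<longrightarrow> leM add z x))"
definition phi :: "'a set \<Rightarrow> ('a \<Rightarrow> 'a \<Rightarrow> 'a) \<Rightarrow> ('a \<Rightarrow> 'a \<Rightarrow> 'a) \<Rightarrow> 'a \<Rightarrow> 'a option \<Rightarrow> 'a option" where
  "phi S add mul s = (\<lambda>y\<in>Xset S mul. Fs S add mul s y)"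

lemma leM_simps[simp]: "leM add None y" "leM add (Some a) None = False" "leM add (Some a) (Some b) = (add a b = b)"
  unfolding leM_def by auto
lemma mjoin_simps[simp]: "mjoin add None y = y" "mjoin add x None = x" "mjoin add (Some a) (Some b) = Some (add a b)"
  unfolding mjoin_def by (auto split: option.split)
lemma rho_simps[simp]: "rho mul s None = None" "rho mul s (Some h) = Some (mul h s)"
  unfolding rho_def by auto

context
  fixes S :: "'a set" and add mul g
  assumes finS: "finite S" and cardS: "card S > 2"
    and SR: "semiring S add mul" and SIM: "simple_semiring S add mul"
    and AI: "add_idempotent S add" and GR: "greatest_elem S add g"
    and RA: "right_absorbing S mul g" and NLA: "\<not> left_absorbing S mul g"
begin

lemma cl_add: "x \<in> S \<Longrightarrow> y \<in> S \<Longrightarrow> add x y \<in> S" using SR unfolding semiring_def by blast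
lemma cl_mul: "x \<in> S \<Longrightarrow> y \<in> S \<Longrightarrow> mul x y \<in> S" using SR unfolding semiring_def by blast
lemma a_assoc: "x \<in> S \<Longrightarrow> y \<in> S \<Longrightarrow> z \<in> S \<Longrightarrow> add (add x y) z = add x (add y z)"
  using SR unfolding semiring_def by blast
lemma a_comm: "x \<in> S \<Longrightarrow> y \<in> S \<Longrightarrow> add x y = add y x" using SR unfolding semiring_def by blast
lemma m_assoc: "x \<in> S \<Longrightarrow> y \<in> S \<Longrightarrow> z \<in> S \<Longrightarrow> mul (mul x y) z = mul x (mul y z)"
  using SR unfolding semiring_def by blast
lemma distl: "x \<in> S \<Longrightarrow> y \<in> S \<Longrightarrow> z \<in> S \<Longrightarrow> mul x (add y z) = add (mul x y) (mul x z)"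
  using SR unfolding semiring_def by blast
lemma distr: "x \<in> S \<Longrightarrow> y \<in> S \<Longrightarrow> z \<in> S \<Longrightarrow> mul (add x y) z = add (mul x z) (mul y z)"
  using SR unfolding semiring_def by blast
lemma idem: "x \<in> S \<Longrightarrow> add x x = x" using AI unfolding add_idempotent_def by blast
lemma gS: "g \<in> S" using GR unfolding greatest_elem_def by blast
lemma add_g: "x \<in> S \<Longrightarrow> add x g = g" using GR unfolding greatest_elem_def by blast
lemma mul_g: "x \<in> S \<Longrightarrow> mul x g = g" using RA unfolding right_absorbing_def by blast
lemma t0_ex: "\<exists>t0\<in>S. mul g t0 \<noteq> g" using NLA unfolding left_absorbing_def by blast

abbreviation "A \<equiv> Aset S mul"
abbreviation "X \<equiv> Xset S mul"
abbreviation "lM \<equiv> leM add"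
abbreviation "Le \<equiv> \<lambda>x y. leM add y x"
abbreviation "mj \<equiv> mjoin add"
abbreviation "F \<equiv> Fs S add mul"

lemma A_S: "h \<in> A \<Longrightarrow> h \<in> S" unfolding Aset_def by blast
lemma A_abs: "h \<in> A \<Longrightarrow> s \<in> S \<Longrightarrow> mul s h = h" unfolding Aset_def by blast
lemma gA: "g \<in> A" unfolding Aset_def using gS mul_g by blast
lemma A_mul: "h \<in> A \<Longrightarrow> s \<in> S \<Longrightarrow> mul h s \<in> A"
proof -
  assume h: "h \<in> A" and s: "s \<in> S"
  have hS: "h \<in> S" using h unfolding Aset_def by blast
  have "mul t (mul h s) = mul h s" if t: "t \<in> S" for t
    using m_assoc[OF t hS s] h t unfolding Aset_def by simp
  then show ?thesis unfolding Aset_def using cl_mul[OF hS s] by blast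
qed
lemma A_add: "h \<in> A \<Longrightarrow> k \<in> A \<Longrightarrow> add h k \<in> A"
proof -
  assume h: "h \<in> A" and k: "k \<in> A"
  have hS: "h \<in> S" "k \<in> S" using h k unfolding Aset_def by auto
  have "mul t (add h k) = add h k" if t: "t \<in> S" for t
    using distl[OF t hS] h k t unfolding Aset_def by simp
  then show ?thesis unfolding Aset_def using cl_add[OF hS] by blast
qed

lemma X_None: "None \<in> X" unfolding Xset_def by blast
lemma X_Some: "Some h \<in> X \<longleftrightarrow> h \<in> A" unfolding Xset_def by blast
lemma X_cases: "x \<in> X \<Longrightarrow> x = None \<or> (\<exists>h\<in>A. x = Some h)" unfolding Xset_def by blast
lemma finX: "finite X"
proof -
  have "A \<subseteq> S" using A_S by blast
  then have "finite A" using finS finite_subset by blast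
  then show ?thesis unfolding Xset_def by simp
qed

lemma sle_refl: "x \<in> S \<Longrightarrow> add x x = x" by (rule idem)
lemma sle_antisym: "x \<in> S \<Longrightarrow> y \<in> S \<Longrightarrow> add x y = y \<Longrightarrow> add y x = x \<Longrightarrow> x = y"
  using a_comm by metis
lemma sle_trans: "x \<in> S \<Longrightarrow> y \<in> S \<Longrightarrow> z \<in> S \<Longrightarrow> add x y = y \<Longrightarrow> add y z = z \<Longrightarrow> add x z = z"
  using a_assoc by metis
lemma sle_ub1: "x \<in> S \<Longrightarrow> y \<in> S \<Longrightarrow> add x (add x y) = add x y"
  using a_assoc idem by metis
lemma sle_ub2: "x \<in> S \<Longrightarrow> y \<in> S \<Longrightarrow> add y (add x y) = add x y"
  using a_assoc idem a_comm by (metis cl_add)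
lemma sle_least: "x \<in> S \<Longrightarrow> y \<in> S \<Longrightarrow> z \<in> S \<Longrightarrow> add x z = z \<Longrightarrow> add y z = z \<Longrightarrow> add (add x y) z = z"
  using a_assoc by metis
lemma sle_mulR: "x \<in> S \<Longrightarrow> y \<in> S \<Longrightarrow> s \<in> S \<Longrightarrow> add x y = y \<Longrightarrow> add (mul x s) (mul y s) = mul y s"
  using distr by metis
lemma sle_mulL: "x \<in> S \<Longrightarrow> y \<in> S \<Longrightarrow> s \<in> S \<Longrightarrow> add x y = y \<Longrightarrow> add (mul s x) (mul s y) = mul s y"
  using distl by metis

lemma lM_refl: "x \<in> X \<Longrightarrow> lM x x"
  by (cases x) (simp_all add: X_Some idem A_S)
lemma lM_antisym: "x \<in> X \<Longrightarrow> y \<in> X \<Longrightarrow> lM x y \<Longrightarrow> lM y x \<Longrightarrow> x = y"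
proof (cases x; cases y)
  fix a b assume "x \<in> X" "y \<in> X" "lM x y" "lM y x" "x = Some a" "y = Some b"
  then show "x = y" using sle_antisym[of a b] A_S by (simp add: X_Some)
qed simp_all
lemma lM_trans: "x \<in> X \<Longrightarrow> y \<in> X \<Longrightarrow> z \<in> X \<Longrightarrow> lM x y \<Longrightarrow> lM y z \<Longrightarrow> lM x z"
proof (cases x; cases y; cases z)
  fix a b c assume "x \<in> X" "y \<in> X" "z \<in> X" "lM x y" "lM y z" "x = Some a" "y = Some b" "z = Some c"
  then show "lM x z" using sle_trans[of a b c] A_S by (simp add: X_Some)
qed simp_all
lemma lM_top: "x \<in> X \<Longrightarrow> lM x (Some g)"
  by (cases x) (simp_all add: X_Some add_g A_S)
lemma lM_None: "x \<in> X \<Longrightarrow> lM x None \<longleftrightarrow> x = None"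
  by (cases x) auto
lemma gX: "Some g \<in> X" using gA X_Some by blast

lemma mj_in: "x \<in> X \<Longrightarrow> y \<in> X \<Longrightarrow> mj x y \<in> X"
  using A_add by (cases x; cases y) (auto simp: X_Some)
lemma mj_ub1: "x \<in> X \<Longrightarrow> y \<in> X \<Longrightarrow> lM x (mj x y)"
  using A_S sle_ub1 idem by (cases x; cases y) (auto simp: X_Some)
lemma mj_ub2: "x \<in> X \<Longrightarrow> y \<in> X \<Longrightarrow> lM y (mj x y)"
  using A_S sle_ub2 idem by (cases x; cases y) (auto simp: X_Some)
lemma mj_least: "x \<in> X \<Longrightarrow> y \<in> X \<Longrightarrow> z \<in> X \<Longrightarrow> lM x z \<Longrightarrow> lM y z \<Longrightarrow> lM (mj x y) z"
  using A_S sle_least by (cases x; cases y; cases z) (auto simp: X_Some)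

lemma meet_ex: "x \<in> X \<Longrightarrow> y \<in> X \<Longrightarrow> \<exists>z\<in>X. lM z x \<and> lM z y \<and> (\<forall>w\<in>X. lM w x \<and> lM w y \<longrightarrow> lM w z)"
proof -
  assume xy: "x \<in> X" "y \<in> X"
  define D where "D = {w\<in>X. lM w x \<and> lM w y}"
  have "\<exists>m\<in>D. \<forall>z\<in>D. lM z m"
  proof (rule gmax[where jn=mj])
    show "finite D" unfolding D_def using finX by simp
    have "None \<in> D" unfolding D_def using X_None by simp
    then show "D \<noteq> {}" by blast
    show "\<And>x. x \<in> D \<Longrightarrow> lM x x" unfolding D_def using lM_refl by blast
    show "\<And>u v. u \<in> D \<Longrightarrow> v \<in> D \<Longrightarrow> mj u v \<in> D \<and> lM u (mj u v) \<and> lM v (mj u v)"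
      unfolding D_def using mj_in mj_ub1 mj_ub2 mj_least xy by simp
    show "\<And>x y z. x \<in> D \<Longrightarrow> y \<in> D \<Longrightarrow> z \<in> D \<Longrightarrow> lM x y \<Longrightarrow> lM y z \<Longrightarrow> lM x z"
      unfolding D_def using lM_trans by blast
  qed
  then show ?thesis unfolding D_def by blast
qed

lemma FLX: "finite_lattice_on X Le"
  unfolding finite_lattice_on_def
proof (intro conjI ballI)
  show "finite X" by (rule finX)
  show "X \<noteq> {}" using X_None by blast
  fix x assume x: "x \<in> X"
  show "lM x x" using x by (rule lM_refl)
  fix y assume y: "y \<in> X"
  show "lM y x \<and> lM x y \<longrightarrow> x = y" using x y lM_antisym by blast
  show "\<exists>z. is_lub X Le x y z" unfolding is_lub_def using meet_ex[OF x y] by blast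
  show "\<exists>z. is_glb X Le x y z" unfolding is_glb_def using mj_in[OF x y] mj_ub1[OF x y] mj_ub2[OF x y] mj_least x y by blast
  fix z assume z: "z \<in> X"
  show "lM y x \<and> lM z y \<longrightarrow> lM z x" using lM_trans x y z by blast
qed

lemma jX_in: "x \<in> X \<Longrightarrow> y \<in> X \<Longrightarrow> ljoin X Le x y \<in> X" by (rule ljoin_in[OF FLX])
lemma jX_iff: "x \<in> X \<Longrightarrow> y \<in> X \<Longrightarrow> w \<in> X \<Longrightarrow> lM w (ljoin X Le x y) \<longleftrightarrow> lM w x \<and> lM w y"
  using ljoin_le_iff[OF FLX] by blast

lemma yoneda: "u \<in> X \<Longrightarrow> v \<in> X \<Longrightarrow> (\<And>z. z \<in> X \<Longrightarrow> lM z u \<longleftrightarrow> lM z v) \<Longrightarrow> u = v"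
  using lM_antisym lM_refl by blast

lemma lbotX: "lbot X Le = Some g"
  using lbot_prop[OF FLX] lM_top gX lM_antisym by blast
lemma ltopX: "ltop X Le = None"
  using ltop_prop[OF FLX] X_None lM_antisym by auto

lemma rho_in: "x \<in> X \<Longrightarrow> s \<in> S \<Longrightarrow> rho mul s x \<in> X"
  using A_mul by (cases x) (auto simp: X_Some)
lemma rho_mono: "x \<in> X \<Longrightarrow> y \<in> X \<Longrightarrow> s \<in> S \<Longrightarrow> lM x y \<Longrightarrow> lM (rho mul s x) (rho mul s y)"
  using A_S sle_mulR by (cases x; cases y) (auto simp: X_Some)
lemma rho_mj: "x \<in> X \<Longrightarrow> y \<in> X \<Longrightarrow> s \<in> S \<Longrightarrow> rho mul s (mj x y) = mj (rho mul s x) (rho mul s y)"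
  using A_S distr by (cases x; cases y) (auto simp: X_Some)
lemma rho_add: "x \<in> X \<Longrightarrow> s \<in> S \<Longrightarrow> t \<in> S \<Longrightarrow> rho mul (add s t) x = mj (rho mul s x) (rho mul t x)"
  using A_S distl by (cases x) (auto simp: X_Some)
lemma rho_mul: "x \<in> X \<Longrightarrow> s \<in> S \<Longrightarrow> t \<in> S \<Longrightarrow> rho mul (mul s t) x = rho mul t (rho mul s x)"
  using A_S m_assoc by (cases x) (auto simp: X_Some)

lemma F_prop: assumes s: "s \<in> S" and y: "y \<in> X"
  shows "F s y \<in> X \<and> lM (rho mul s (F s y)) y \<and> (\<forall>z\<in>X. lM (rho mul s z) y \<longrightarrow> lM z (F s y))"
proof -
  define D where "D = {w\<in>X. lM (rho mul s w) y}"
  have "\<exists>m\<in>D. \<forall>z\<in>D. lM z m"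
  proof (rule gmax[where jn=mj])
    show "finite D" unfolding D_def using finX by simp
    have "None \<in> D" unfolding D_def using X_None by simp
    then show "D \<noteq> {}" by blast
    show "\<And>x. x \<in> D \<Longrightarrow> lM x x" unfolding D_def using lM_refl by blast
    show "\<And>u v. u \<in> D \<Longrightarrow> v \<in> D \<Longrightarrow> mj u v \<in> D \<and> lM u (mj u v) \<and> lM v (mj u v)"
      unfolding D_def using mj_in mj_ub1 mj_ub2 mj_least rho_mj rho_in s y by simp
    show "\<And>x y z. x \<in> D \<Longrightarrow> y \<in> D \<Longrightarrow> z \<in> D \<Longrightarrow> lM x y \<Longrightarrow> lM y z \<Longrightarrow> lM x z"
      unfolding D_def using lM_trans by blast
  qed
  then obtain m where m: "m \<in> X" "lM (rho mul s m) y" "\<forall>z\<in>X. lM (rho mul s z) y \<longrightarrow> lM z m"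
    unfolding D_def by blast
  have "\<exists>!x. x \<in> X \<and> lM (rho mul s x) y \<and> (\<forall>z\<in>X. lM (rho mul s z) y \<longrightarrow> lM z x)"
    using m lM_antisym by blast
  then show ?thesis unfolding Fs_def by (rule theI')
qed

lemma F_in: "s \<in> S \<Longrightarrow> y \<in> X \<Longrightarrow> F s y \<in> X" using F_prop by blast

lemma GAL: "s \<in> S \<Longrightarrow> x \<in> X \<Longrightarrow> y \<in> X \<Longrightarrow> lM x (F s y) \<longleftrightarrow> lM (rho mul s x) y"
proof
  assume a: "s \<in> S" "x \<in> X" "y \<in> X" "lM x (F s y)"
  have "lM (rho mul s x) (rho mul s (F s y))" using rho_mono a F_in by blast
  then show "lM (rho mul s x) y" using F_prop[OF a(1,3)] lM_trans rho_in a F_in by blast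
next
  assume "s \<in> S" "x \<in> X" "y \<in> X" "lM (rho mul s x) y"
  then show "lM x (F s y)" using F_prop by blast
qed

lemma F_join: "s \<in> S \<Longrightarrow> y1 \<in> X \<Longrightarrow> y2 \<in> X \<Longrightarrow> F s (ljoin X Le y1 y2) = ljoin X Le (F s y1) (F s y2)"
  by (rule yoneda) (simp_all add: F_in jX_in GAL jX_iff rho_in)

lemma F_bot: "s \<in> S \<Longrightarrow> F s (Some g) = Some g"
  by (rule yoneda) (simp_all add: F_in gX GAL rho_in lM_top)

lemma F_top: "s \<in> S \<Longrightarrow> F s None = None"
proof (rule yoneda)
  fix z assume "s \<in> S" "z \<in> X"
  then show "lM z (F s None) \<longleftrightarrow> lM z None" using GAL X_None lM_None rho_in
    by (cases z) auto
qed (simp_all add: F_in X_None)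

lemma F_add: "s \<in> S \<Longrightarrow> t \<in> S \<Longrightarrow> y \<in> X \<Longrightarrow> F (add s t) y = ljoin X Le (F s y) (F t y)"
proof (rule yoneda)
  fix z assume a: "s \<in> S" "t \<in> S" "y \<in> X" "z \<in> X"
  have "lM z (F (add s t) y) \<longleftrightarrow> lM (mj (rho mul s z) (rho mul t z)) y"
    using GAL[OF cl_add[OF a(1,2)] a(4,3)] rho_add a by simp
  also have "\<dots> \<longleftrightarrow> lM (rho mul s z) y \<and> lM (rho mul t z) y"
    using mj_least mj_ub1 mj_ub2 lM_trans rho_in a mj_in by meson
  also have "\<dots> \<longleftrightarrow> lM z (ljoin X Le (F s y) (F t y))"
    using jX_iff F_in GAL a by simp
  finally show "lM z (F (add s t) y) \<longleftrightarrow> lM z (ljoin X Le (F s y) (F t y))" .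
qed (simp_all add: F_in jX_in cl_add)

lemma F_mul: "s \<in> S \<Longrightarrow> t \<in> S \<Longrightarrow> y \<in> X \<Longrightarrow> F (mul s t) y = F s (F t y)"
  by (rule yoneda) (simp_all add: F_in cl_mul GAL rho_mul rho_in)

lemma F_A: "h \<in> A \<Longrightarrow> y \<in> X \<Longrightarrow> F h y = (if lM (Some h) y then Some g else None)"
proof (rule yoneda)
  fix z assume a: "h \<in> A" "y \<in> X" "z \<in> X"
  have hS: "h \<in> S" using a A_S by blast
  have r: "rho mul h z = (if z = None then None else Some h)"
    using a(3) A_abs[OF a(1)] A_S by (cases z) (auto simp: X_Some)
  show "lM z (F h y) \<longleftrightarrow> lM z (if lM (Some h) y then Some g else None)"
    using GAL[OF hS a(3,2)] r lM_top[OF a(3)] lM_None[OF a(3)] by (cases "z = None") auto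
qed (auto simp: F_in A_S gX X_None)


lemma simple_S: "equiv S r \<Longrightarrow> (\<And>x y u v. (x,y)\<in>r \<Longrightarrow> (u,v)\<in>r \<Longrightarrow> (add x u, add y v) \<in> r \<and> (mul x u, mul y v) \<in> r)
   \<Longrightarrow> r = Id_on S \<or> r = S \<times> S"
  using SIM unfolding simple_semiring_def semiring_congruence_def by blast

lemma equiv_pred: "equiv S {(s,t). s \<in> S \<and> t \<in> S \<and> Q s t}"
  if "\<And>s. s \<in> S \<Longrightarrow> Q s s" "\<And>s t. Q s t \<Longrightarrow> Q t s" "\<And>s t u. Q s t \<Longrightarrow> Q t u \<Longrightarrow> Q s u"
  using that unfolding equiv_def refl_on_def sym_def trans_def by blast

lemma rho_inj: assumes s: "s \<in> S" and t: "t \<in> S" and e: "\<forall>h\<in>A. mul h s = mul h t" shows "s = t"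
proof -
  define r where "r = {(s,t). s \<in> S \<and> t \<in> S \<and> (\<forall>h\<in>A. mul h s = mul h t)}"
  have EQ: "equiv S r" unfolding r_def by (rule equiv_pred) auto
  have CP: "(add x u, add y v) \<in> r \<and> (mul x u, mul y v) \<in> r" if "(x,y)\<in>r" "(u,v)\<in>r" for x y u v
  proof -
    have xy: "x \<in> S" "y \<in> S" "u \<in> S" "v \<in> S" "\<forall>h\<in>A. mul h x = mul h y" "\<forall>h\<in>A. mul h u = mul h v"
      using that unfolding r_def by auto
    have "\<forall>h\<in>A. mul h (add x u) = mul h (add y v)" using xy distl A_S by simp
    moreover have "\<forall>h\<in>A. mul h (mul x u) = mul h (mul y v)"
    proof
      fix h assume h: "h \<in> A"
      have hS: "h \<in> S" using h A_S by blast
      have "mul h (mul x u) = mul (mul h x) u" using m_assoc[OF hS xy(1) xy(3)] by simp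
      also have "\<dots> = mul (mul h y) u" using xy(5) h by simp
      also have "\<dots> = mul (mul h y) v" using xy(6) A_mul[OF h xy(2)] by blast
      also have "\<dots> = mul h (mul y v)" using m_assoc[OF hS xy(2) xy(4)] by simp
      finally show "mul h (mul x u) = mul h (mul y v)" .
    qed
    ultimately show ?thesis unfolding r_def using xy cl_add cl_mul by simp
  qed
  obtain t0 where t0: "t0 \<in> S" "mul g t0 \<noteq> g" using t0_ex by blast
  have "mul g g \<noteq> mul g t0" using mul_g[OF gS] t0 by simp
  then have "(g, t0) \<notin> r" unfolding r_def using gA by blast
  then have "r \<noteq> S \<times> S" using t0 gS by blast
  then have "r = Id_on S" using simple_S[OF EQ CP] by blast
  moreover have "(s,t) \<in> r" unfolding r_def using s t e by simp
  ultimately show ?thesis by auto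
qed

lemma F_inj: assumes s: "s \<in> S" and t: "t \<in> S" and e: "\<forall>y\<in>X. F s y = F t y" shows "s = t"
proof (rule rho_inj[OF s t], rule ballI)
  fix h assume h: "h \<in> A"
  have hX: "Some h \<in> X" using h X_Some by simp
  have c: "lM (rho mul s (Some h)) y \<longleftrightarrow> lM (rho mul t (Some h)) y" if "y \<in> X" for y
    using GAL[OF s hX that] GAL[OF t hX that] e that by simp
  have "rho mul s (Some h) = rho mul t (Some h)"
    using c[OF rho_in[OF hX s]] c[OF rho_in[OF hX t]] lM_refl lM_antisym rho_in hX s t by blast
  then show "mul h s = mul h t" by simp
qed

lemma ideal: "s \<in> S \<Longrightarrow> \<exists>c\<in>A. \<forall>h\<in>A. add c (mul h s) = mul h s"
proof -
  define I where "I = {s\<in>S. \<exists>c\<in>A. \<forall>h\<in>A. add c (mul h s) = mul h s}"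
  have AI': "A \<subseteq> I"
  proof
    fix a assume a: "a \<in> A"
    have "\<forall>h\<in>A. add a (mul h a) = mul h a" using a A_abs A_S idem by simp
    then show "a \<in> I" unfolding I_def using a A_S by blast
  qed
  have IS: "I \<subseteq> S" unfolding I_def by blast
  have I_add: "add s t \<in> I" if st: "s \<in> I" "t \<in> S" for s t
  proof -
    obtain c where c: "c \<in> A" "\<forall>h\<in>A. add c (mul h s) = mul h s" "s \<in> S" using st(1) unfolding I_def by blast
    have "add c (mul h (add s t)) = mul h (add s t)" if h: "h \<in> A" for h
    proof -
      have "mul h (add s t) = add (mul h s) (mul h t)" using distl A_S h c(3) \<open>t \<in> S\<close> by simp
      moreover have "add c (add (mul h s) (mul h t)) = add (mul h s) (mul h t)"
        using c h A_S cl_mul \<open>t \<in> S\<close> a_assoc by (metis)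
      ultimately show ?thesis by simp
    qed
    then show ?thesis unfolding I_def using c cl_add \<open>t \<in> S\<close> by blast
  qed
  have I_add2: "add t s \<in> I" if "s \<in> I" "t \<in> S" for s t
    using I_add[OF that] a_comm that IS by auto
  have I_mulL: "mul t s \<in> I" if st: "s \<in> I" "t \<in> S" for s t
  proof -
    obtain c where c: "c \<in> A" "\<forall>h\<in>A. add c (mul h s) = mul h s" "s \<in> S" using st(1) unfolding I_def by blast
    have "add c (mul h (mul t s)) = mul h (mul t s)" if h: "h \<in> A" for h
      using c(2) A_mul[OF h \<open>t \<in> S\<close>] m_assoc A_S h \<open>t \<in> S\<close> c(3) by metis
    then show ?thesis unfolding I_def using c cl_mul \<open>t \<in> S\<close> by blast
  qed
  have I_mulR: "mul s t \<in> I" if st: "s \<in> I" "t \<in> S" for s t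
  proof -
    obtain c where c: "c \<in> A" "\<forall>h\<in>A. add c (mul h s) = mul h s" "s \<in> S" using st(1) unfolding I_def by blast
    have "add (mul c t) (mul h (mul s t)) = mul h (mul s t)" if h: "h \<in> A" for h
    proof -
      have "add (mul c t) (mul (mul h s) t) = mul (mul h s) t"
        using sle_mulR[of c "mul h s" t] c h A_S cl_mul \<open>t \<in> S\<close> by simp
      then show ?thesis using m_assoc A_S h c(3) \<open>t \<in> S\<close> by simp
    qed
    then show ?thesis unfolding I_def using A_mul[OF c(1) \<open>t \<in> S\<close>] cl_mul c(3) \<open>t \<in> S\<close> by blast
  qed
  define r where "r = Id_on S \<union> I \<times> I"
  have EQ: "equiv S r" unfolding r_def equiv_def refl_on_def sym_def trans_def using IS by blast
  have CP: "(add x u, add y v) \<in> r \<and> (mul x u, mul y v) \<in> r" if xyuv: "(x,y)\<in>r" "(u,v)\<in>r" for x y u v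
  proof -
    consider "x = y" "x \<in> S" "u = v" "u \<in> S" | "x = y" "x \<in> S" "u \<in> I" "v \<in> I"
      | "x \<in> I" "y \<in> I" "u = v" "u \<in> S" | "x \<in> I" "y \<in> I" "u \<in> I" "v \<in> I"
      using xyuv unfolding r_def by blast
    then show ?thesis
    proof cases
      case 1 then show ?thesis unfolding r_def using cl_add cl_mul by auto
    next
      case 2 then show ?thesis unfolding r_def using I_add2 I_mulL by auto
    next
      case 3 then show ?thesis unfolding r_def using I_add I_mulR by auto
    next
      case 4 then show ?thesis unfolding r_def using I_add I_mulR IS by auto
    qed
  qed
  obtain t0 where t0: "t0 \<in> S" "mul g t0 \<noteq> g" using t0_ex by blast
  have "(g, mul g t0) \<in> r" unfolding r_def using AI' gA A_mul[OF gA t0(1)] by blast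
  then have "r \<noteq> Id_on S" using t0 by auto
  then have "r = S \<times> S" using simple_S[OF EQ CP] by blast
  moreover assume s: "s \<in> S"
  ultimately have "(s, g) \<in> r" using gS by blast
  then have "s \<in> I" unfolding r_def using AI' gA by auto
  then show ?thesis unfolding I_def by blast
qed

lemma not_le_g: "h \<in> A \<Longrightarrow> h \<noteq> g \<Longrightarrow> \<not> lM (Some g) (Some h)"
proof
  assume h: "h \<in> A" "h \<noteq> g" and "lM (Some g) (Some h)"
  then have "add g h = h" by simp
  moreover have "add h g = g" using add_g A_S h by blast
  ultimately show False using a_comm[of g h] A_S h gS by simp
qed

lemma F_g_p: "p \<in> A \<Longrightarrow> p \<noteq> g \<Longrightarrow> F g (Some p) = None"
  using F_A[OF gA] X_Some not_le_g by simp
lemma F_p_p: "p \<in> A \<Longrightarrow> F p (Some p) = Some g"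
  using F_A X_Some idem A_S by simp

lemma orbit: assumes p: "p \<in> A" "p \<noteq> g" and b: "b \<in> X" shows "\<exists>s\<in>S. F s (Some p) = b"
proof -
  define a where "a = Some p"
  have aX: "a \<in> X" unfolding a_def using p X_Some by simp
  have pS: "p \<in> S" using p A_S by blast
  have Fga: "F g a = None" unfolding a_def using F_g_p p by simp
  have Fpa: "F p a = Some g" unfolding a_def using F_p_p p by simp
  have exs: "\<exists>s0\<in>S. F s0 a \<noteq> None \<and> F s0 a \<noteq> Some g"
  proof (rule ccontr)
    assume "\<not> ?thesis"
    then have H: "\<forall>s\<in>S. F s a \<in> {None, Some g}" by blast
    define r where "r = {(s,t). s \<in> S \<and> t \<in> S \<and> F s a = F t a}"
    have EQ: "equiv S r" unfolding r_def by (rule equiv_pred) auto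
    have CP: "(add x u, add y v) \<in> r \<and> (mul x u, mul y v) \<in> r" if "(x,y)\<in>r" "(u,v)\<in>r" for x y u v
    proof -
      have xy: "x \<in> S" "y \<in> S" "u \<in> S" "v \<in> S" "F x a = F y a" "F u a = F v a"
        using that unfolding r_def by auto
      have "F (add x u) a = F (add y v) a" using F_add xy aX by simp
      moreover have "F (mul x u) a = F (mul y v) a"
      proof -
        have fix1: "F w (F u a) = F u a" if "w \<in> S" for w
          using H xy(3) F_top F_bot that by auto
        have "F (mul x u) a = F x (F u a)" using F_mul xy aX by simp
        also have "\<dots> = F u a" using fix1 xy by simp
        also have "\<dots> = F y (F v a)" using fix1 xy by simp
        also have "\<dots> = F (mul y v) a" using F_mul xy aX by simp
        finally show ?thesis .
      qed
      ultimately show ?thesis unfolding r_def using xy cl_add cl_mul by simp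
    qed
    have "(g, p) \<notin> r" unfolding r_def using Fga Fpa by auto
    then have "r \<noteq> S \<times> S" using gS pS by blast
    then have "r = Id_on S" using simple_S[OF EQ CP] by blast
    then have "inj_on (\<lambda>s. F s a) S" unfolding inj_on_def r_def by auto
    moreover have "(\<lambda>s. F s a) ` S \<subseteq> {None, Some g}" using H by (simp add: image_subset_iff)
    ultimately have "card S \<le> card {None, Some g}" by (intro card_inj_on_le) auto
    also have "\<dots> \<le> 2" by (simp add: card_insert_le_m1)
    finally show False using cardS by simp
  qed
  then obtain s0 x0 where s0: "s0 \<in> S" "F s0 a = Some x0" "x0 \<noteq> g"
    by (metis option.exhaust)
  have x0A: "x0 \<in> A" using F_in[OF s0(1) aX] s0 X_Some by simp
  define Orb where "Orb = (\<lambda>s. F s a) ` S"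
  have OrbX: "Orb \<subseteq> X" unfolding Orb_def using F_in aX by blast
  have Orb_cl: "F u z \<in> Orb" if uz: "u \<in> S" "z \<in> Orb" for u z
  proof -
    obtain w where w: "w \<in> S" "z = F w a" using uz unfolding Orb_def by blast
    then have "F u z = F (mul u w) a" using F_mul uz aX by simp
    then show ?thesis unfolding Orb_def using cl_mul w uz by blast
  qed
  define K where "K = {(s,t). s \<in> S \<and> t \<in> S \<and> (\<forall>z\<in>Orb. F s z = F t z)}"
  have EQK: "equiv S K" unfolding K_def by (rule equiv_pred) auto
  have CPK: "(add x u, add y v) \<in> K \<and> (mul x u, mul y v) \<in> K" if "(x,y)\<in>K" "(u,v)\<in>K" for x y u v
  proof -
    have xy: "x \<in> S" "y \<in> S" "u \<in> S" "v \<in> S" "\<forall>z\<in>Orb. F x z = F y z" "\<forall>z\<in>Orb. F u z = F v z"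
      using that unfolding K_def by auto
    have "\<forall>z\<in>Orb. F (add x u) z = F (add y v) z" using F_add xy OrbX by auto
    moreover have "\<forall>z\<in>Orb. F (mul x u) z = F (mul y v) z"
    proof
      fix z assume z: "z \<in> Orb"
      have "F (mul x u) z = F x (F u z)" using F_mul xy z OrbX by auto
      also have "\<dots> = F y (F v z)" using xy z Orb_cl by simp
      also have "\<dots> = F (mul y v) z" using F_mul xy z OrbX by auto
      finally show "F (mul x u) z = F (mul y v) z" .
    qed
    ultimately show ?thesis unfolding K_def using xy cl_add cl_mul by simp
  qed
  have x0Orb: "Some x0 \<in> Orb" unfolding Orb_def using s0 by force
  have "F g (Some x0) = None" using F_g_p x0A s0 by simp
  moreover have "F x0 (Some x0) = Some g" using F_p_p x0A by simp
  ultimately have "(g, x0) \<notin> K" unfolding K_def using x0Orb by force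
  then have "K \<noteq> S \<times> S" using gS x0A A_S by blast
  then have KId: "K = Id_on S" using simple_S[OF EQK CPK] by blast
  show ?thesis
  proof (cases b)
    case None then show ?thesis using Fga gS unfolding a_def by blast
  next
    case (Some q)
    then have qA: "q \<in> A" using b X_Some by simp
    have qX: "Some q \<in> X" using qA X_Some by simp
    define T where "T = {z\<in>Orb. lM (Some q) z}"
    have "\<exists>m\<in>T. \<forall>z\<in>T. lM m z"
    proof (rule gmax[where jn="ljoin X Le" and le="\<lambda>x y. lM y x"])
      show "finite T" unfolding T_def Orb_def using finS by simp
      have "Some g \<in> T" unfolding T_def Orb_def using Fpa pS lM_top qX by force
      then show "T \<noteq> {}" by blast
      show "\<And>x. x \<in> T \<Longrightarrow> lM x x" unfolding T_def using lM_refl OrbX by blast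
      show "\<And>x y z. x \<in> T \<Longrightarrow> y \<in> T \<Longrightarrow> z \<in> T \<Longrightarrow> lM y x \<Longrightarrow> lM z y \<Longrightarrow> lM z x"
        unfolding T_def using lM_trans OrbX by blast
      fix x y assume xy: "x \<in> T" "y \<in> T"
      obtain s1 s2 where s12: "s1 \<in> S" "s2 \<in> S" "x = F s1 a" "y = F s2 a"
        using xy unfolding T_def Orb_def by blast
      have xyX: "x \<in> X" "y \<in> X" using xy OrbX unfolding T_def by auto
      have jX: "ljoin X Le x y \<in> X" using jX_in xyX by blast
      have "ljoin X Le x y = F (add s1 s2) a" using F_add s12 aX by simp
      then have "ljoin X Le x y \<in> Orb" unfolding Orb_def using cl_add s12 by blast
      moreover have "lM (Some q) (ljoin X Le x y)" using jX_iff[OF xyX qX] xy unfolding T_def by blast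
      moreover have "lM (ljoin X Le x y) x \<and> lM (ljoin X Le x y) y"
        using jX_iff[OF xyX jX] lM_refl[OF jX] by blast
      ultimately show "ljoin X Le x y \<in> T \<and> lM (ljoin X Le x y) x \<and> lM (ljoin X Le x y) y"
        unfolding T_def by blast
    qed
    then obtain m where m: "m \<in> T" "\<forall>z\<in>T. lM m z" by blast
    have mX: "m \<in> X" using m OrbX unfolding T_def by blast
    have qm: "lM (Some q) m" using m unfolding T_def by blast
    obtain m' where m': "m = Some m'" using qm by (cases m) auto
    have m'A: "m' \<in> A" using mX m' X_Some by simp
    have "m' = q"
    proof (rule ccontr)
      assume ne: "m' \<noteq> q"
      then have "(q, m') \<notin> K" using KId by auto
      then obtain z where z: "z \<in> Orb" "F q z \<noteq> F m' z" unfolding K_def using qA m'A A_S by blast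
      have zX: "z \<in> X" using z OrbX by blast
      show False
      proof (cases "lM (Some q) z")
        case True
        then have "z \<in> T" unfolding T_def using z by blast
        then have "lM m z" using m by blast
        then show False using z True F_A qA m'A zX m' by simp
      next
        case False
        then have "\<not> lM (Some m') z" using lM_trans[OF qX _ zX qm] mX m' by blast
        then show False using z False F_A qA m'A zX by simp
      qed
    qed
    then have "Some q \<in> Orb" using m m' unfolding T_def by blast
    then show ?thesis unfolding Orb_def a_def using Some by force
  qed
qed


abbreviation "P \<equiv> phi S add mul"

lemma P_val: "y \<in> X \<Longrightarrow> P s y = F s y" unfolding phi_def by simp
lemma P_ext: "P s \<in> extensional X" unfolding phi_def by simp

lemma P_Res1: assumes s: "s \<in> S" shows "P s \<in> Res1 X Le"
  unfolding Res1_def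
proof (intro CollectI conjI ballI)
  show "P s \<in> X \<rightarrow>\<^sub>E X" unfolding PiE_iff using P_ext P_val F_in s by auto
  fix x y assume xy: "x \<in> X" "y \<in> X"
  show "P s (ljoin X Le x y) = ljoin X Le (P s x) (P s y)"
    using xy P_val jX_in F_join s by simp
next
  show "P s (lbot X Le) = lbot X Le" using lbotX P_val gX F_bot s by simp
  show "P s (ltop X Le) = ltop X Le" using ltopX P_val X_None F_top s by simp
qed

lemma P_join: "s \<in> S \<Longrightarrow> t \<in> S \<Longrightarrow> fjoin X Le (P s) (P t) = P (add s t)"
  by (rule extensionalityI[OF fjoin_ext P_ext]) (simp add: fjoin_val P_val F_add)

lemma P_comp: "s \<in> S \<Longrightarrow> t \<in> S \<Longrightarrow> fcomp X (P s) (P t) = P (mul s t)"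
  by (rule extensionalityI[OF fcomp_ext P_ext]) (simp add: fcomp_val P_val F_in F_mul)

lemma P_inj: "inj_on P S"
proof (rule inj_onI)
  fix s t assume st: "s \<in> S" "t \<in> S" "P s = P t"
  then have "\<forall>y\<in>X. F s y = F t y" using P_val by metis
  then show "s = t" using F_inj st by blast
qed

lemma good_X: "good_pair X Le (P ` S)"
  unfolding good_pair_def
proof (intro conjI)
  show "finite_lattice_on X Le" by (rule FLX)
  obtain t0 where t0: "t0 \<in> S" "mul g t0 \<noteq> g" using t0_ex by blast
  have "{None, Some g, Some (mul g t0)} \<subseteq> X" using X_None gX A_mul[OF gA t0(1)] X_Some by auto
  then have "card {None, Some g, Some (mul g t0)} \<le> card X" by (rule card_mono[OF finX])
  moreover have "card {None, Some g, Some (mul g t0)} = 3" using t0 by auto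
  ultimately show "card X > 2" by simp
  show "subsemiring_Res1 X Le (P ` S)"
    unfolding subsemiring_Res1_def
  proof (intro conjI ballI)
    show "P ` S \<noteq> {}" using gS by blast
    show "P ` S \<subseteq> Res1 X Le" using P_Res1 by blast
    fix f h assume fh: "f \<in> P ` S" "h \<in> P ` S"
    then obtain s t where st: "s \<in> S" "t \<in> S" "f = P s" "h = P t" by blast
    show "fjoin X Le f h \<in> P ` S" using st P_join cl_add by auto
    show "fcomp X f h \<in> P ` S" using st P_comp cl_mul by auto
  qed
  show "\<forall>a\<in>X - {ltop X Le}. fab X Le a (lbot X Le) \<in> P ` S"
  proof
    fix a assume a: "a \<in> X - {ltop X Le}"
    then obtain h where h: "a = Some h" "h \<in> A" using ltopX X_cases by auto
    have "fab X Le a (lbot X Le) = P h"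
    proof (rule extensionalityI[OF fab_ext P_ext])
      fix y assume y: "y \<in> X"
      show "fab X Le a (lbot X Le) y = P h y"
        using y h by (simp add: fab_val lbotX ltopX P_val F_A)
    qed
    then show "fab X Le a (lbot X Le) \<in> P ` S" using h A_S by blast
  qed
  show "\<forall>f\<in>P ` S. \<exists>a\<in>X - {ltop X Le}. \<forall>x\<in>X. Le (fab X Le a (lbot X Le) x) (f x)"
  proof
    fix f assume "f \<in> P ` S"
    then obtain s where s: "s \<in> S" "f = P s" by blast
    obtain c where c: "c \<in> A" "\<forall>h\<in>A. add c (mul h s) = mul h s" using ideal[OF s(1)] by blast
    have cX: "Some c \<in> X" using c X_Some by simp
    have "\<forall>x\<in>X. lM (f x) (fab X Le (Some c) (lbot X Le) x)"
    proof
      fix x assume x: "x \<in> X"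
      show "lM (f x) (fab X Le (Some c) (lbot X Le) x)"
      proof (cases "lM (Some c) x")
        case True
        then show ?thesis using x s F_in lM_top by (simp add: fab_val lbotX P_val)
      next
        case False
        have "F s x = None"
        proof (rule ccontr)
          assume "F s x \<noteq> None"
          then obtain h' where h': "F s x = Some h'" by blast
          have h'X: "Some h' \<in> X" using h' F_in s x by metis
          then have h'A: "h' \<in> A" using X_Some by simp
          have "lM (Some h') (F s x)" using lM_refl[OF h'X] h' by simp
          then have "lM (Some (mul h' s)) x" using GAL[OF s(1) h'X x] by simp
          moreover have "lM (Some c) (Some (mul h' s))" using c h'A by simp
          moreover have "Some (mul h' s) \<in> X" using A_mul h'A s X_Some by simp
          ultimately have "lM (Some c) x" using lM_trans cX x by blast
          then show False using False by simp
        qed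
        then show ?thesis using x s False by (simp add: fab_val ltopX P_val)
      qed
    qed
    moreover have "Some c \<in> X - {ltop X Le}" using cX ltopX by simp
    ultimately show "\<exists>a\<in>X - {ltop X Le}. \<forall>x\<in>X. Le (fab X Le a (lbot X Le) x) (f x)" by blast
  qed
  show "\<forall>a\<in>X - {lbot X Le, ltop X Le}. \<forall>b\<in>X. \<exists>f\<in>P ` S. f a = b"
  proof (intro ballI)
    fix a b assume a: "a \<in> X - {lbot X Le, ltop X Le}" and b: "b \<in> X"
    then obtain p where p: "a = Some p" "p \<in> A" "p \<noteq> g" using lbotX ltopX X_cases by auto
    obtain s where "s \<in> S" "F s (Some p) = b" using orbit[OF p(2,3) b] by blast
    then show "\<exists>f\<in>P ` S. f a = b" using p a P_val by force
  qed
qed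

lemma iso_X: "semiring_iso P S add mul (P ` S) (fjoin X Le) (fcomp X)"
  unfolding semiring_iso_def
  using inj_on_imp_bij_betw[OF P_inj] P_join P_comp by (simp add: cl_add cl_mul)

lemma dir2_X: "\<exists>(L :: 'a option set) le R \<phi>. good_pair L le R \<and> semiring_iso \<phi> S add mul R (fjoin L le) (fcomp L)"
  using good_X iso_X by blast

end



context
  fixes L :: "'c set" and le and j :: "'c \<Rightarrow> nat"
  assumes FL: "finite_lattice_on L le" and INJ: "inj_on j L"
begin

abbreviation "L2 \<equiv> j ` L"
abbreviation "iv \<equiv> inv_into L j"
abbreviation "le2 \<equiv> \<lambda>x y. le (iv x) (iv y)"
definition cj :: "('c \<Rightarrow> 'c) \<Rightarrow> nat \<Rightarrow> nat" where "cj f = (\<lambda>x\<in>L2. j (f (iv x)))"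

lemma ij[simp]: "x \<in> L \<Longrightarrow> iv (j x) = x" using INJ by (simp add: inv_into_f_f)
lemma ji[simp]: "y \<in> L2 \<Longrightarrow> j (iv y) = y" by (simp add: f_inv_into_f)
lemma iv_in[simp]: "y \<in> L2 \<Longrightarrow> iv y \<in> L" by (simp add: inv_into_into)

lemma FL2: "finite_lattice_on L2 le2"
  unfolding finite_lattice_on_def
proof (intro conjI ballI)
  show "finite L2" using L_fin[OF FL] by simp
  show "L2 \<noteq> {}" using L_ne[OF FL] by simp
  fix x assume x: "x \<in> L2"
  show "le2 x x" using x L_refl[OF FL] by simp
  fix y assume y: "y \<in> L2"
  show "le2 x y \<and> le2 y x \<longrightarrow> x = y" using x y L_antisym[OF FL] by (metis ji iv_in)
  show "\<exists>z. is_lub L2 le2 x y z"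
  proof
    show "is_lub L2 le2 x y (j (ljoin L le (iv x) (iv y)))"
      unfolding is_lub_def using x y ljoin_in[OF FL] ljoin_ub1[OF FL] ljoin_ub2[OF FL] ljoin_least[OF FL] by auto
  qed
  show "\<exists>z. is_glb L2 le2 x y z"
  proof
    show "is_glb L2 le2 x y (j (lmeet L le (iv x) (iv y)))"
      using x y lmeet_glb[OF FL, of "iv x" "iv y"] unfolding is_glb_def by auto
  qed
  fix z assume z: "z \<in> L2"
  show "le2 x y \<and> le2 y z \<longrightarrow> le2 x z" using x y z L_trans[OF FL] by (metis iv_in)
qed

lemma ljoin2: "x \<in> L \<Longrightarrow> y \<in> L \<Longrightarrow> ljoin L2 le2 (j x) (j y) = j (ljoin L le x y)"
proof (rule ljoin_eq[OF FL2])
  assume xy: "x \<in> L" "y \<in> L"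
  then show "j x \<in> L2" "j y \<in> L2" by auto
  show "is_lub L2 le2 (j x) (j y) (j (ljoin L le x y))"
    unfolding is_lub_def using xy ljoin_in[OF FL] ljoin_ub1[OF FL] ljoin_ub2[OF FL] ljoin_least[OF FL] by auto
qed

lemma lbot2: "lbot L2 le2 = j (lbot L le)"
proof -
  have a: "lbot L2 le2 \<in> L2" "\<forall>x\<in>L2. le2 (lbot L2 le2) x" using lbot_prop[OF FL2] by auto
  have b: "j (lbot L le) \<in> L2" "\<forall>x\<in>L2. le2 (j (lbot L le)) x" using lbot_prop[OF FL] by auto
  show ?thesis using L_antisym[OF FL2] a b by blast
qed

lemma ltop2: "ltop L2 le2 = j (ltop L le)"
proof -
  have a: "ltop L2 le2 \<in> L2" "\<forall>x\<in>L2. le2 x (ltop L2 le2)" using ltop_prop[OF FL2] by auto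
  have b: "j (ltop L le) \<in> L2" "\<forall>x\<in>L2. le2 x (j (ltop L le))" using ltop_prop[OF FL] by auto
  show ?thesis using L_antisym[OF FL2] a b by blast
qed

lemma cj_val: "y \<in> L2 \<Longrightarrow> cj f y = j (f (iv y))" unfolding cj_def by simp
lemma cj_ext: "cj f \<in> extensional L2" unfolding cj_def by simp

lemma cj_Res1: assumes f: "f \<in> Res1 L le" shows "cj f \<in> Res1 L2 le2"
  unfolding Res1_def
proof (intro CollectI conjI ballI)
  show "cj f \<in> L2 \<rightarrow>\<^sub>E L2" unfolding PiE_iff using cj_ext Res1_fun[OF FL f] by (auto simp: cj_val)
  fix x y assume xy: "x \<in> L2" "y \<in> L2"
  have "ljoin L2 le2 x y = j (ljoin L le (iv x) (iv y))" using ljoin2[of "iv x" "iv y"] xy by simp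
  moreover have "ljoin L2 le2 (cj f x) (cj f y) = j (ljoin L le (f (iv x)) (f (iv y)))"
    using ljoin2 xy Res1_fun[OF FL f] by (simp add: cj_val)
  ultimately show "cj f (ljoin L2 le2 x y) = ljoin L2 le2 (cj f x) (cj f y)"
    using xy Res1_join[OF FL f] ljoin_in[OF FL] by (simp add: cj_val)
next
  show "cj f (lbot L2 le2) = lbot L2 le2" using lbot2 lbot_in[OF FL] Res1_bot[OF FL f] by (simp add: cj_val)
  show "cj f (ltop L2 le2) = ltop L2 le2" using ltop2 ltop_in[OF FL] Res1_top[OF FL f] by (simp add: cj_val)
qed

lemma cj_fjoin: "f \<in> Res1 L le \<Longrightarrow> h \<in> Res1 L le \<Longrightarrow> fjoin L2 le2 (cj f) (cj h) = cj (fjoin L le f h)"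
  by (rule extensionalityI[OF fjoin_ext cj_ext]) (simp add: fjoin_val cj_val ljoin2 Res1_fun[OF FL])

lemma cj_fcomp: "f \<in> Res1 L le \<Longrightarrow> h \<in> Res1 L le \<Longrightarrow> fcomp L2 (cj f) (cj h) = cj (fcomp L f h)"
  by (rule extensionalityI[OF fcomp_ext cj_ext]) (simp add: fcomp_val cj_val Res1_fun[OF FL])

lemma cj_fab: "a \<in> L \<Longrightarrow> b \<in> L \<Longrightarrow> fab L2 le2 (j a) (j b) = cj (fab L le a b)"
  by (rule extensionalityI[OF fab_ext cj_ext]) (simp add: fab_val cj_val ltop2)

lemma cj_inj: "inj_on cj (Res1 L le)"
proof (rule inj_onI)
  fix f h assume fh: "f \<in> Res1 L le" "h \<in> Res1 L le" "cj f = cj h"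
  show "f = h"
  proof (rule extensionalityI[OF Res1_extensional[OF fh(1)] Res1_extensional[OF fh(2)]])
    fix x assume x: "x \<in> L"
    have "cj f (j x) = cj h (j x)" using fh by simp
    then have "j (f x) = j (h x)" using x by (simp add: cj_val)
    then show "f x = h x" using INJ Res1_fun[OF FL] fh x by (meson inj_onD)
  qed
qed

lemma transfer:
  assumes GP: "good_pair L le R" and ISO: "semiring_iso \<phi> S add mul R (fjoin L le) (fcomp L)"
  shows "good_pair L2 le2 (cj ` R) \<and> semiring_iso (cj \<circ> \<phi>) S add mul (cj ` R) (fjoin L2 le2) (fcomp L2)"
proof
  have RR: "R \<subseteq> Res1 L le" using R_Res1[OF GP] by blast
  show "good_pair L2 le2 (cj ` R)"
    unfolding good_pair_def
  proof (intro conjI)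
    show "finite_lattice_on L2 le2" by (rule FL2)
    have "card L > 2" by (rule cardL[OF GP])
    then show "card L2 > 2" using card_image[OF INJ] by simp
    show "subsemiring_Res1 L2 le2 (cj ` R)"
      unfolding subsemiring_Res1_def
    proof (intro conjI ballI)
      show "cj ` R \<noteq> {}" using R_ne[OF GP] by blast
      show "cj ` R \<subseteq> Res1 L2 le2" using RR cj_Res1 by blast
      fix f h assume "f \<in> cj ` R" "h \<in> cj ` R"
      then obtain f0 h0 where fh: "f0 \<in> R" "h0 \<in> R" "f = cj f0" "h = cj h0" by blast
      have "fjoin L le f0 h0 \<in> R" "fcomp L f0 h0 \<in> R"
        using R_join[OF GP fh(1,2)] R_comp[OF GP fh(1,2)] by auto
      moreover have "f0 \<in> Res1 L le" "h0 \<in> Res1 L le" using fh RR by auto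
      ultimately show "fjoin L2 le2 f h \<in> cj ` R" "fcomp L2 f h \<in> cj ` R"
        using fh(3,4) cj_fjoin cj_fcomp by auto
    qed
    show "\<forall>a\<in>L2 - {ltop L2 le2}. fab L2 le2 a (lbot L2 le2) \<in> cj ` R"
    proof
      fix a2 assume "a2 \<in> L2 - {ltop L2 le2}"
      then obtain a where a: "a \<in> L" "a2 = j a" by blast
      have "a \<noteq> ltop L le" using a \<open>a2 \<in> L2 - {ltop L2 le2}\<close> ltop2 by auto
      note a = a this
      have "fab L le a (lbot L le) \<in> R" using cond_i[OF GP a(1) a(3)] .
      then show "fab L2 le2 a2 (lbot L2 le2) \<in> cj ` R" using a lbot2 cj_fab lbot_in[OF FL] by auto
    qed
    show "\<forall>f\<in>cj ` R. \<exists>a\<in>L2 - {ltop L2 le2}. \<forall>x\<in>L2. le2 (fab L2 le2 a (lbot L2 le2) x) (f x)"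
    proof
      fix f assume "f \<in> cj ` R"
      then obtain f0 where f0: "f0 \<in> R" "f = cj f0" by blast
      obtain a where a: "a \<in> L - {ltop L le}" "\<forall>x\<in>L. le (fab L le a (lbot L le) x) (f0 x)"
        using cond_ii[OF GP f0(1)] by blast
      have aL: "a \<in> L" "a \<noteq> ltop L le" using a by auto
      have "j a \<noteq> j (ltop L le)" using aL INJ ltop_in[OF FL] inj_onD by metis
      then have "j a \<in> L2 - {ltop L2 le2}" using aL ltop2 by simp
      moreover have "\<forall>x\<in>L2. le2 (fab L2 le2 (j a) (lbot L2 le2) x) (f x)"
      proof
        fix x assume x: "x \<in> L2"
        have m1: "fab L le a (lbot L le) (iv x) \<in> L"
          using lbot_in[OF FL] ltop_in[OF FL] by (simp add: fab_val[OF iv_in[OF x]])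
        have f0R: "f0 \<in> Res1 L le" using RR f0(1) by blast
        have m2: "f0 (iv x) \<in> L" by (rule Res1_fun[OF FL f0R iv_in[OF x]])
        have e1: "fab L2 le2 (j a) (lbot L2 le2) x = j (fab L le a (lbot L le) (iv x))"
          using lbot2 cj_fab[OF aL(1) lbot_in[OF FL]] x by (simp add: cj_val)
        have e2: "f x = j (f0 (iv x))" using f0(2) x by (simp add: cj_val)
        have "le (fab L le a (lbot L le) (iv x)) (f0 (iv x))" using a(2) x by simp
        then show "le2 (fab L2 le2 (j a) (lbot L2 le2) x) (f x)" using e1 e2 m1 m2 by simp
      qed
      ultimately show "\<exists>a\<in>L2 - {ltop L2 le2}. \<forall>x\<in>L2. le2 (fab L2 le2 a (lbot L2 le2) x) (f x)" by blast
    qed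
    show "\<forall>a\<in>L2 - {lbot L2 le2, ltop L2 le2}. \<forall>b\<in>L2. \<exists>f\<in>cj ` R. f a = b"
    proof (intro ballI)
      fix a2 b2 assume a2: "a2 \<in> L2 - {lbot L2 le2, ltop L2 le2}" and b2: "b2 \<in> L2"
      then obtain a where a: "a \<in> L" "a2 = j a" by blast
      have "a \<noteq> lbot L le" "a \<noteq> ltop L le" using a a2 lbot2 ltop2 by auto
      note a = a this
      obtain f0 where f0: "f0 \<in> R" "f0 a = iv b2" using cond_iii[OF GP a(1) a(3) a(4) iv_in[OF b2]] by blast
      have "cj f0 a2 = b2" using f0 a b2 by (simp add: cj_val)
      then show "\<exists>f\<in>cj ` R. f a2 = b2" using f0 by blast
    qed
  qed
  show "semiring_iso (cj \<circ> \<phi>) S add mul (cj ` R) (fjoin L2 le2) (fcomp L2)"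
    unfolding semiring_iso_def
  proof (intro conjI ballI)
    have "bij_betw \<phi> S R" using ISO unfolding semiring_iso_def by blast
    moreover have "bij_betw cj R (cj ` R)" using inj_on_subset[OF cj_inj RR] by (rule inj_on_imp_bij_betw)
    ultimately show "bij_betw (cj \<circ> \<phi>) S (cj ` R)" by (rule bij_betw_trans)
    fix x y assume xy: "x \<in> S" "y \<in> S"
    have h: "\<phi> (add x y) = fjoin L le (\<phi> x) (\<phi> y)" "\<phi> (mul x y) = fcomp L (\<phi> x) (\<phi> y)"
      using ISO xy unfolding semiring_iso_def by auto
    have inR: "\<phi> x \<in> Res1 L le" "\<phi> y \<in> Res1 L le"
      using ISO xy RR unfolding semiring_iso_def bij_betw_def by auto
    show "(cj \<circ> \<phi>) (add x y) = fjoin L2 le2 ((cj \<circ> \<phi>) x) ((cj \<circ> \<phi>) y)"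
      using h inR cj_fjoin by simp
    show "(cj \<circ> \<phi>) (mul x y) = fcomp L2 ((cj \<circ> \<phi>) x) ((cj \<circ> \<phi>) y)"
      using h inR cj_fcomp by simp
  qed
qed

end

lemma to_nat:
  fixes L :: "'c set"
  assumes GP: "good_pair L le R" and ISO: "semiring_iso \<phi> S add mul R (fjoin L le) (fcomp L)"
  shows "\<exists>(L2 :: nat set) le2 R2 \<phi>2. good_pair L2 le2 R2 \<and> semiring_iso \<phi>2 S add mul R2 (fjoin L2 le2) (fcomp L2)"
proof -
  have FL: "finite_lattice_on L le" using GP unfolding good_pair_def by blast
  obtain j :: "'c \<Rightarrow> nat" where "bij_betw j L {0..<card L}" using ex_bij_betw_finite_nat L_fin[OF FL] by blast
  then have INJ: "inj_on j L" by (rule bij_betw_imp_inj_on)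
  show ?thesis using transfer[OF FL INJ GP ISO] by blast
qed



theorem theorem5p2:
  shows "(\<forall>(L :: 'b set) le R. good_pair L le R \<longrightarrow>
            finite R \<and> semiring R (fjoin L le) (fcomp L) \<and>
            simple_semiring R (fjoin L le) (fcomp L) \<and>
            add_idempotent R (fjoin L le) \<and>
            (\<exists>g. greatest_elem R (fjoin L le) g \<and> right_absorbing R (fcomp L) g \<and>
                 \<not> left_absorbing R (fcomp L) g))
       \<and> (\<forall>(S :: 'a set) add mul.
            finite S \<and> card S > 2 \<and> semiring S add mul \<and> simple_semiring S add mul \<and>
            add_idempotent S add \<and>
            (\<exists>g. greatest_elem S add g \<and> right_absorbing S mul g \<and> \<not> left_absorbing S mul g)
            \<longrightarrow> (\<exists>(L :: nat set) le R \<phi>. good_pair L le R \<and>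
                   semiring_iso \<phi> S add mul R (fjoin L le) (fcomp L)))"
proof (rule conjI)
  show "\<forall>(L :: 'b set) le R. good_pair L le R \<longrightarrow>
            finite R \<and> semiring R (fjoin L le) (fcomp L) \<and>
            simple_semiring R (fjoin L le) (fcomp L) \<and>
            add_idempotent R (fjoin L le) \<and>
            (\<exists>g. greatest_elem R (fjoin L le) g \<and> right_absorbing R (fcomp L) g \<and>
                 \<not> left_absorbing R (fcomp L) g)"
  proof (intro allI impI)
  fix L :: "'b set" and le R
  assume "good_pair L le R"
  then show "finite R \<and> semiring R (fjoin L le) (fcomp L) \<and>
            simple_semiring R (fjoin L le) (fcomp L) \<and>
            add_idempotent R (fjoin L le) \<and>
            (\<exists>g. greatest_elem R (fjoin L le) g \<and> right_absorbing R (fcomp L) g \<and>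
                 \<not> left_absorbing R (fcomp L) g)" by (rule dir1)
  qed
next
  show "\<forall>(S :: 'a set) add mul.
            finite S \<and> card S > 2 \<and> semiring S add mul \<and> simple_semiring S add mul \<and>
            add_idempotent S add \<and>
            (\<exists>g. greatest_elem S add g \<and> right_absorbing S mul g \<and> \<not> left_absorbing S mul g)
            \<longrightarrow> (\<exists>(L :: nat set) le R \<phi>. good_pair L le R \<and>
                   semiring_iso \<phi> S add mul R (fjoin L le) (fcomp L))"
  proof (intro allI impI)
  fix S :: "'a set" and add mul
  assume H: "finite S \<and> card S > 2 \<and> semiring S add mul \<and> simple_semiring S add mul \<and>
            add_idempotent S add \<and>
            (\<exists>g. greatest_elem S add g \<and> right_absorbing S mul g \<and> \<not> left_absorbing S mul g)"
  then obtain g where g: "greatest_elem S add g" "right_absorbing S mul g" "\<not> left_absorbing S mul g" by blast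
  have "\<exists>(L :: 'a option set) le R \<phi>. good_pair L le R \<and> semiring_iso \<phi> S add mul R (fjoin L le) (fcomp L)"
    using dir2_X[of S add mul g] H g by blast
  then obtain L :: "'a option set" and le R \<phi> where "good_pair L le R" "semiring_iso \<phi> S add mul R (fjoin L le) (fcomp L)"
    by blast
  then show "\<exists>(L :: nat set) le R \<phi>. good_pair L le R \<and>
                   semiring_iso \<phi> S add mul R (fjoin L le) (fcomp L)" by (rule to_nat)
  qed
qed

end
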